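(* Let $\mathbb L\subset\mathbb Z^k$ be a sublattice of finite index and $m_1,\dots,m_k$ positive integers, $|m|=\sum m_i$. Let $W\subset\mathbb R^k$ be a wall of codimension $r$ not contained in any hyperplane $\{b_i=0\}$, and let $C$ be an open cell of $W\cap\mathbb R^k_+$. Then there exists $c\ge0$ with \[\sum_{\substack{\underline b\cdot\underline h\le N\\ b_i,h_i\in\mathbb N\\ \underline b\in C\cap\mathbb L}}b_1^{m_1}\cdots b_k^{m_k}=c\,N^{|m|+k-r}+o(N^{|m|+k-r})\quad(N\to\infty),\] and $c>0$ if and only if $W\cap\mathbb L$ is a lattice in $W$.
   Context: A wall in $\mathbb R^k$ is a hyperplane $\sum_{i\in I}b_i-\sum_{j\in J}b_j=0$ ($I,J\subset\{1..k\}$ disjoint) or an intersection of such hyperplanes; the walls subdivide $\mathbb R^k$ into relatively open polyhedral cones (cells); an open cell of $W\cap\mathbb R^k_+$ is such a cone open in $W\cap\mathbb R^k_+$ of dimension $k-r$. $\mathbb N=\{1,2,\dots\}$ and $\underline b\cdot\underline h=\sum b_ih_i$. *)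

theory Defs
  imports "HOL-Analysis.Analysis" "HOL-Library.Landau_Symbols"
begin

text \<open>Vectors in R^k are modelled as real^'k with a finite index type 'k (k = CARD('k)).\<close>

definition wall_pairs :: "('k::finite set \<times> 'k set) set" where
  "wall_pairs = {(I,J). I \<inter> J = {} \<and> I \<union> J \<noteq> {}}"

definition wall_form :: "'k::finite set \<Rightarrow> 'k set \<Rightarrow> real^'k \<Rightarrow> real" where
  "wall_form I J b = (\<Sum>i\<in>I. b$i) - (\<Sum>j\<in>J. b$j)"

definition wall_hyperplane :: "'k::finite set \<Rightarrow> 'k set \<Rightarrow> (real^'k) set" where
  "wall_hyperplane I J = {b. wall_form I J b = 0}"

definition is_wall :: "(real^'k::finite) set \<Rightarrow> bool" where
  "is_wall W \<longleftrightarrow> (\<exists>F. F \<noteq> {} \<and> F \<subseteq> wall_pairs \<and>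
      W = (\<Inter>(I,J)\<in>F. wall_hyperplane I J))"

text \<open>Cells of the subdivision of R^k by all walls: the classes of points having the
  same position (sign) relative to every wall hyperplane.\<close>
definition is_cell :: "(real^'k::finite) set \<Rightarrow> bool" where
  "is_cell C \<longleftrightarrow> (\<exists>a. C = {b. \<forall>(I,J)\<in>wall_pairs. sgn (wall_form I J b) = sgn (wall_form I J a)})"

definition pos_orthant :: "(real^'k::finite) set" where
  "pos_orthant = {b. \<forall>i. 0 < b$i}"

text \<open>An open cell of W \<inter> R^k_+: a cell contained in W \<inter> R^k_+ of dimension dim W = k - r.\<close>
definition open_cell_of :: "(real^'k::finite) set \<Rightarrow> (real^'k) set \<Rightarrow> bool" where
  "open_cell_of W C \<longleftrightarrow> is_cell C \<and> C \<subseteq> W \<inter> pos_orthant \<and> aff_dim C = int (dim W)"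

definition int_vecs :: "(real^'k::finite) set" where
  "int_vecs = {x. \<forall>i. x$i \<in> \<int>}"

definition finite_index_sublattice :: "(real^'k::finite) set \<Rightarrow> bool" where
  "finite_index_sublattice L \<longleftrightarrow> L \<subseteq> int_vecs \<and> 0 \<in> L \<and>
     (\<forall>x\<in>L. \<forall>y\<in>L. x + y \<in> L) \<and> (\<forall>x\<in>L. - x \<in> L) \<and>
     finite {{y \<in> int_vecs. y - x \<in> L} | x. x \<in> int_vecs}"

definition lattice_in :: "(real^'k::finite) set \<Rightarrow> (real^'k) set \<Rightarrow> bool" where
  "lattice_in \<Lambda> V \<longleftrightarrow> \<Lambda> \<subseteq> V \<and> 0 \<in> \<Lambda> \<and> (\<forall>x\<in>\<Lambda>. \<forall>y\<in>\<Lambda>. x + y \<in> \<Lambda>) \<and> (\<forall>x\<in>\<Lambda>. - x \<in> \<Lambda>) \<and>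
     (\<exists>e>0. \<forall>x\<in>\<Lambda>. x \<noteq> 0 \<longrightarrow> e \<le> norm x) \<and> span \<Lambda> = V"

definition real_vec :: "nat^'k::finite \<Rightarrow> real^'k" where
  "real_vec b = (\<chi> i. real (b$i))"

definition wall_sum :: "(real^'k::finite) set \<Rightarrow> (real^'k) set \<Rightarrow> ('k \<Rightarrow> nat) \<Rightarrow> real \<Rightarrow> real" where
  "wall_sum C L m N = (\<Sum>(b,h)\<in>{(b::nat^'k, h::nat^'k).
        (\<forall>i. 1 \<le> b$i \<and> 1 \<le> h$i) \<and> real (\<Sum>i\<in>UNIV. b$i * h$i) \<le> N \<and>
        real_vec b \<in> C \<inter> L}.
      \<Prod>i\<in>UNIV. real (b$i) ^ m i)"

end

theory Submission
  imports Defs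
begin

lemma wall_form_linear: "linear (wall_form (I::'k::finite set) J)"
proof (rule linearI)
  fix x y :: "real^'k" and c :: real
  show "wall_form I J (x + y) = wall_form I J x + wall_form I J y"
    by (simp add: wall_form_def sum.distrib algebra_simps)
  show "wall_form I J (c *\<^sub>R x) = c *\<^sub>R wall_form I J x"
    by (simp add: wall_form_def sum_distrib_left right_diff_distrib)
qed

lemma wall_form_int: "x \<in> int_vecs \<Longrightarrow> wall_form I J x \<in> \<int>"
  unfolding wall_form_def int_vecs_def by (intro Ints_diff Ints_sum) auto

lemma int_vecs_add: "x \<in> int_vecs \<Longrightarrow> y \<in> int_vecs \<Longrightarrow> x + y \<in> int_vecs"
  and int_vecs_diff: "x \<in> int_vecs \<Longrightarrow> y \<in> int_vecs \<Longrightarrow> x - y \<in> int_vecs"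
  and int_vecs_scale: "x \<in> int_vecs \<Longrightarrow> c \<in> \<int> \<Longrightarrow> c *\<^sub>R x \<in> int_vecs"
  unfolding int_vecs_def by auto

lemma span_int_step:
  fixes f :: "real^'k \<Rightarrow> real" and G :: "(real^'k) set"
  assumes lin: "linear f" and fint: "\<And>x. x \<in> int_vecs \<Longrightarrow> f x \<in> \<int>"
    and G: "G \<subseteq> int_vecs" and w: "w \<in> span G" and fw: "f w = 0"
  shows "w \<in> span ((span G \<inter> {x. f x = 0}) \<inter> int_vecs)"
proof (cases "\<forall>g\<in>G. f g = 0")
  case True
  have "\<forall>x\<in>span G. f x = 0"
  proof
    fix x assume "x \<in> span G"
    then show "f x = 0"
    proof (induction rule: span_induct_alt)
      case base then show ?case using lin by (simp add: linear_0)
    next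
      case (step c x y) then show ?case using lin True
        by (simp add: linear_add linear_scale)
    qed
  qed
  then have "G \<subseteq> (span G \<inter> {x. f x = 0}) \<inter> int_vecs"
    using G span_base by blast
  then show ?thesis using w span_mono by blast
next
  case False
  then obtain v where v: "v \<in> G" "f v \<noteq> 0" by blast
  define Q where "Q x = x - (f x / f v) *\<^sub>R v" for x
  have linQ: "linear Q"
  proof (rule linearI)
    fix x y :: "real^'k" and c :: real
    show "Q (x + y) = Q x + Q y" unfolding Q_def using lin
      by (simp add: linear_add add_divide_distrib scaleR_add_left)
    show "Q (c *\<^sub>R x) = c *\<^sub>R Q x" unfolding Q_def using lin
      by (simp add: linear_scale scaleR_diff_right)
  qed
  define N where "N = (span G \<inter> {x. f x = 0}) \<inter> int_vecs"
  have QG: "Q g \<in> span N" if g: "g \<in> G" for g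
  proof -
    have vi: "f v \<in> \<int>" and gi: "f g \<in> \<int>" using fint G v g by auto
    have "f v *\<^sub>R g - f g *\<^sub>R v \<in> N"
    proof -
      have "f v *\<^sub>R g - f g *\<^sub>R v \<in> span G"
        using g v by (intro span_diff span_scale span_base)
      moreover have "f v *\<^sub>R g - f g *\<^sub>R v \<in> int_vecs"
        using G g v vi gi by (intro int_vecs_diff int_vecs_scale) auto
      moreover have "f (f v *\<^sub>R g - f g *\<^sub>R v) = 0"
        using lin by (simp add: linear_diff linear_scale)
      ultimately show ?thesis by (simp add: N_def)
    qed
    then have "(1 / f v) *\<^sub>R (f v *\<^sub>R g - f g *\<^sub>R v) \<in> span N"
      by (intro span_scale span_base)
    moreover have "(1 / f v) *\<^sub>R (f v *\<^sub>R g - f g *\<^sub>R v) = Q g"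
      using v(2) by (simp add: Q_def scaleR_diff_right divide_inverse)
    ultimately show ?thesis by simp
  qed
  have "Q w \<in> Q ` span G" using w by blast
  also have "\<dots> = span (Q ` G)" using span_linear_image[OF linQ] by simp
  also have "\<dots> \<subseteq> span N" using QG by (simp add: image_subset_iff span_minimal subspace_span)
  finally show ?thesis using fw by (simp add: Q_def N_def)
qed

definition WF :: "('k::finite set \<times> 'k set) set \<Rightarrow> (real^'k) set" where
  "WF F = {b. \<forall>p\<in>F. wall_form (fst p) (snd p) b = 0}"

lemma wall_form_simps [simp]:
  "wall_form I J 0 = 0"
  "wall_form I J (x + y) = wall_form I J x + wall_form I J y"
  "wall_form I J (x - y) = wall_form I J x - wall_form I J y"
  "wall_form I J (c *\<^sub>R x) = c * wall_form I J x"
  "wall_form I J (- x) = - wall_form I J x"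
  by (simp_all add: wall_form_def sum.distrib sum_subtractf sum_distrib_left algebra_simps sum_negf)

lemma subspace_WF: "subspace (WF F)"
  unfolding subspace_def WF_def by auto

lemma WF_insert: "WF (insert p F) = WF F \<inter> {x. wall_form (fst p) (snd p) x = 0}"
  unfolding WF_def by auto

lemma UNIV_span_int: "(UNIV :: (real^'k::finite) set) \<subseteq> span int_vecs"
proof -
  have "(Basis :: (real^'k) set) \<subseteq> int_vecs"
    by (auto simp: Basis_vec_def int_vecs_def axis_def)
  then have "span (Basis :: (real^'k) set) \<subseteq> span int_vecs" by (rule span_mono)
  then show ?thesis by (simp add: span_Basis)
qed

lemma WF_span_int:
  assumes "finite F"
  shows "WF F \<subseteq> span (WF F \<inter> int_vecs)"
  using assms
proof (induction F rule: finite_induct)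
  case empty
  then show ?case using UNIV_span_int by (simp add: WF_def)
next
  case (insert p F)
  have eq: "span (WF F \<inter> int_vecs) = WF F"
    using insert.IH span_minimal[OF _ subspace_WF, of "WF F \<inter> int_vecs" F] by blast
  show ?case
  proof
    fix w assume w: "w \<in> WF (insert p F)"
    then have "w \<in> span (WF F \<inter> int_vecs)" using eq by (simp add: WF_insert)
    moreover have "wall_form (fst p) (snd p) w = 0" using w by (simp add: WF_insert)
    ultimately have "w \<in> span ((span (WF F \<inter> int_vecs) \<inter> {x. wall_form (fst p) (snd p) x = 0}) \<inter> int_vecs)"
      by (intro span_int_step wall_form_linear wall_form_int) auto
    then show "w \<in> span (WF (insert p F) \<inter> int_vecs)"
      by (simp add: eq WF_insert)
  qed
qed

locale lat =
  fixes L :: "(real^'k::finite) set"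
  assumes L: "finite_index_sublattice L"
begin

lemma L_int: "x \<in> L \<Longrightarrow> x \<in> int_vecs"
  and L_zero: "0 \<in> L"
  and L_add: "x \<in> L \<Longrightarrow> y \<in> L \<Longrightarrow> x + y \<in> L"
  and L_neg: "x \<in> L \<Longrightarrow> - x \<in> L"
  using L unfolding finite_index_sublattice_def by auto

lemma L_diff: "x \<in> L \<Longrightarrow> y \<in> L \<Longrightarrow> x - y \<in> L"
  using L_add[of x "- y"] L_neg[of y] by simp

lemma L_nat_scale: "x \<in> L \<Longrightarrow> real n *\<^sub>R x \<in> L"
  by (induction n) (auto simp: L_zero L_add scaleR_add_left)

lemma L_int_scale: assumes "x \<in> L" "c \<in> \<int>" shows "c *\<^sub>R x \<in> L"
proof -
  obtain z where z: "c = of_int z" using assms(2) Ints_cases by blast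
  show ?thesis
  proof (cases "z \<ge> 0")
    case True
    then have "c = real (nat z)" using z by simp
    then show ?thesis using L_nat_scale[OF assms(1)] by simp
  next
    case False
    then have "c = - real (nat (- z))" using z by simp
    then show ?thesis using L_neg[OF L_nat_scale[OF assms(1), of "nat (-z)"]] by simp
  qed
qed

lemma L_sum: "finite A \<Longrightarrow> (\<And>a. a \<in> A \<Longrightarrow> f a \<in> L) \<Longrightarrow> sum f A \<in> L"
  by (induction A rule: finite_induct) (auto simp: L_zero L_add)

lemma L_mult: "\<exists>M::nat. M > 0 \<and> (\<forall>x\<in>int_vecs. real M *\<^sub>R x \<in> L)"
proof -
  define Cs where "Cs = {{y \<in> int_vecs. y - x \<in> L} | x. x \<in> int_vecs}"
  define Kc where "Kc x = {y \<in> int_vecs. y - x \<in> L}" for x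
  have finCs: "finite Cs" using L unfolding finite_index_sublattice_def Cs_def by auto
  define n where "n = card Cs"
  have "real (fact n) *\<^sub>R x \<in> L" if x: "x \<in> int_vecs" for x
  proof -
    define f where "f j = Kc (real j *\<^sub>R x)" for j :: nat
    have img: "f ` {0..n} \<subseteq> Cs"
      unfolding f_def Kc_def Cs_def using x by (auto intro!: int_vecs_scale)
    have "card (f ` {0..n}) \<le> n" using card_mono[OF finCs img] n_def by simp
    then have "card (f ` {0..n}) < card {0..n}" by simp
    then have "\<not> inj_on f {0..n}" by (rule pigeonhole)
    then obtain j j' where jj: "j \<in> {0..n}" "j' \<in> {0..n}" "j \<noteq> j'" "f j = f j'"
      unfolding inj_on_def by blast
    have diffL: "(real a - real b) *\<^sub>R x \<in> L" if "f a = f b" for a b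
    proof -
      have "real a *\<^sub>R x \<in> f a" unfolding f_def Kc_def using x L_zero by (auto intro!: int_vecs_scale)
      then have "real a *\<^sub>R x \<in> f b" using that by simp
      then show ?thesis unfolding f_def Kc_def by (simp add: scaleR_diff_left)
    qed
    obtain a b where ab: "f a = f b" "b < a" "a \<le> n"
      using jj by (metis atLeastAtMost_iff linorder_neqE_nat)
    have "(real a - real b) *\<^sub>R x \<in> L" using diffL[OF ab(1)] .
    then have abL: "real (a - b) *\<^sub>R x \<in> L" using ab by (simp add: of_nat_diff)
    have "(a - b) dvd fact n" using ab by (intro dvd_fact) auto
    then obtain q where q: "fact n = (a - b) * q" by blast
    have "real (fact n) *\<^sub>R x = real q *\<^sub>R (real (a - b) *\<^sub>R x)"
      by (simp add: q mult.commute)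
    then show ?thesis using L_nat_scale[OF abL, of q] by (auto simp: L_zero)
  qed
  then show ?thesis by (intro exI[of _ "fact n"]) auto
qed

lemma span_WF_L:
  assumes "finite F"
  shows "span (WF F \<inter> L) = WF F"
proof
  show "span (WF F \<inter> L) \<subseteq> WF F"
    by (rule span_minimal[OF _ subspace_WF]) auto
  obtain M :: nat where M: "M > 0" "\<forall>x\<in>int_vecs. real M *\<^sub>R x \<in> L" using L_mult by blast
  have "WF F \<inter> int_vecs \<subseteq> span (WF F \<inter> L)"
  proof
    fix g assume g: "g \<in> WF F \<inter> int_vecs"
    then have "real M *\<^sub>R g \<in> WF F \<inter> L" using M subspace_WF[of F]
      by (auto simp: subspace_def)
    then have "(1 / real M) *\<^sub>R (real M *\<^sub>R g) \<in> span (WF F \<inter> L)"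
      by (intro span_scale span_base)
    then show "g \<in> span (WF F \<inter> L)" using M by simp
  qed
  then have "span (WF F \<inter> int_vecs) \<subseteq> span (WF F \<inter> L)"
    by (simp add: span_minimal)
  then show "WF F \<subseteq> span (WF F \<inter> L)" using WF_span_int[OF assms] by blast
qed

end


definition dotn :: "real^'k::finite \<Rightarrow> nat^'k \<Rightarrow> real" where
  "dotn y h = (\<Sum>i\<in>UNIV. y$i * real (h$i))"

locale ws = lat L for L :: "(real^'k::finite) set" +
  fixes W C :: "(real^'k) set" and m :: "'k \<Rightarrow> nat" and F :: "('k set \<times> 'k set) set"
    and a0 :: "real^'k" and S :: "'k set" and \<beta> :: "'k \<Rightarrow> real^'k"
  assumes mpos: "\<forall>i. 0 < m i"
  and WF: "W = WF F"
  and C: "C = {b. \<forall>(I,J)\<in>wall_pairs. sgn (wall_form I J b) = sgn (wall_form I J a0)}"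
  and CW: "C \<subseteq> W \<inter> pos_orthant" and Cdim: "aff_dim C = int (dim W)"
  and \<beta>L: "\<beta> ` S \<subseteq> W \<inter> L" and \<beta>inj: "inj_on \<beta> S" and \<beta>ind: "independent (\<beta> ` S)"
  and \<beta>span: "span (\<beta> ` S) = W"
begin

definition \<sigma> :: "'k set \<times> 'k set \<Rightarrow> real" where
  "\<sigma> p = sgn (wall_form (fst p) (snd p) a0)"

definition V :: "real^'k \<Rightarrow> real^'k" where
  "V z = (\<Sum>i\<in>S. z$i *\<^sub>R \<beta> i)"

definition Tset :: "(real^'k) set" where
  "Tset = {t. (\<forall>i\<in>S. t$i \<in> \<int>) \<and> (\<forall>i. i \<notin> S \<longrightarrow> t$i = 0)}"

definition Rset :: "(real^'k) set" where
  "Rset = {r \<in> W \<inter> L. \<exists>s. (\<forall>i\<in>S. 0 \<le> s$i \<and> s$i < 1) \<and> r = V s}"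

definition pG :: "real^'k \<Rightarrow> nat" where
  "pG y = card {h::nat^'k. (\<forall>i. 1 \<le> h$i) \<and> dotn y h \<le> 1}"

definition pp :: "real^'k \<Rightarrow> real" where
  "pp y = (\<Prod>i\<in>UNIV. (y$i) ^ m i)"

definition \<Phi> :: "real^'k \<Rightarrow> real" where
  "\<Phi> y = (if y \<in> C then pp y * real (pG y) else 0)"

lemma finite_wall_pairs: "finite (wall_pairs :: ('k set \<times> 'k set) set)"
  by (rule finite_subset[OF subset_UNIV]) simp

lemma subspace_W: "subspace W" using WF subspace_WF by simp

lemma C_mem: "y \<in> C \<longleftrightarrow> (\<forall>p\<in>wall_pairs. sgn (wall_form (fst p) (snd p) y) = \<sigma> p)"
  unfolding C \<sigma>_def by auto

lemma C_nonempty: "C \<noteq> {}"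
proof
  assume "C = {}"
  then have "aff_dim C = -1" by simp
  then show False using Cdim by simp
qed

lemma C_pos: "y \<in> C \<Longrightarrow> 0 < y$i"
  using CW unfolding pos_orthant_def by auto

lemma C_W: "y \<in> C \<Longrightarrow> y \<in> W" using CW by auto

lemma sigma_zero:
  assumes p: "\<sigma> p = 0" and pw: "p \<in> wall_pairs" and y: "y \<in> W"
  shows "wall_form (fst p) (snd p) y = 0"
proof -
  define H where "H = {x. wall_form (fst p) (snd p) x = 0}"
  have affH: "affine H" unfolding H_def affine_def
    by (auto simp flip: scaleR_add_left)
  have CH: "C \<subseteq> H"
  proof
    fix c assume "c \<in> C"
    then have "sgn (wall_form (fst p) (snd p) c) = \<sigma> p" using pw unfolding C_mem by auto
    then show "c \<in> H" using p by (simp add: H_def sgn_zero_iff)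
  qed
  have affW: "affine W" using subspace_W subspace_imp_affine by blast
  have "affine hull C = W"
  proof (rule affine_dim_equal)
    show "affine (affine hull C)" by simp
    show "affine W" by (rule affW)
    show "affine hull C \<noteq> {}" using C_nonempty by simp
    show "affine hull C \<subseteq> W" using CW affW by (simp add: hull_minimal)
    show "aff_dim (affine hull C) = aff_dim W"
      using Cdim aff_dim_subspace[OF subspace_W] by simp
  qed
  moreover have "affine hull C \<subseteq> H" using CH affH by (simp add: hull_minimal)
  ultimately show ?thesis using y H_def by auto
qed

lemma C_scale: assumes "0 < c" shows "c *\<^sub>R y \<in> C \<longleftrightarrow> y \<in> C"
  using assms by (simp add: C_mem sgn_mult)

lemma finite_S: "finite S" by (rule finite_subset[OF subset_UNIV]) simp

lemma V_simps [simp]: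
  "V 0 = 0" "V (x + y) = V x + V y" "V (x - y) = V x - V y" "V (c *\<^sub>R x) = c *\<^sub>R V x"
  "V (- x) = - V x"
  by (simp_all add: V_def scaleR_add_left sum.distrib scaleR_diff_left sum_subtractf
      scaleR_sum_right sum_negf)

lemma linear_V: "linear V"
  by (rule linearI) simp_all

lemma V_W: "V z \<in> W"
proof -
  have "V z \<in> span (\<beta> ` S)" unfolding V_def
    by (intro span_sum span_scale span_base) auto
  then show ?thesis using \<beta>span by simp
qed

lemma V_L: assumes "t \<in> Tset" shows "V t \<in> L"
  unfolding V_def using assms \<beta>L finite_S unfolding Tset_def
  by (intro L_sum L_int_scale) auto

lemma V_cong: "(\<forall>i\<in>S. z$i = z'$i) \<Longrightarrow> V z = V z'"
  unfolding V_def by simp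

lemma V_inj:
  assumes z: "\<forall>i. i \<notin> S \<longrightarrow> z$i = 0" and Vz: "V z = 0"
  shows "z = 0"
proof -
  define c where "c v = z $ (inv_into S \<beta> v)" for v
  have fin: "finite (\<beta> ` S)" using finite_S by simp
  have "(\<Sum>v\<in>\<beta> ` S. c v *\<^sub>R v) = (\<Sum>i\<in>S. c (\<beta> i) *\<^sub>R \<beta> i)"
    by (rule sum.reindex[OF \<beta>inj, unfolded comp_def])
  also have "\<dots> = V z" unfolding V_def c_def using \<beta>inj by (intro sum.cong) auto
  finally have "(\<Sum>v\<in>\<beta> ` S. c v *\<^sub>R v) = 0" using Vz by simp
  then have "\<forall>v\<in>\<beta> ` S. c v = 0" using \<beta>ind by (simp add: independent_explicit)
  then have "\<forall>i\<in>S. z$i = 0" unfolding c_def using \<beta>inj by auto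
  then show ?thesis using z by (simp add: vec_eq_iff) (metis)
qed

lemma V_surj:
  assumes "y \<in> W"
  obtains z where "\<forall>i. i \<notin> S \<longrightarrow> z$i = 0" "y = V z"
proof -
  have fin: "finite (\<beta> ` S)" using finite_S by simp
  have "y \<in> span (\<beta> ` S)" using assms \<beta>span by simp
  then obtain u where u: "y = (\<Sum>v\<in>\<beta> ` S. u v *\<^sub>R v)"
    using span_finite[OF fin] by auto
  define z where "z = (\<chi> i. if i \<in> S then u (\<beta> i) else 0)"
  have "y = (\<Sum>i\<in>S. u (\<beta> i) *\<^sub>R \<beta> i)"
    using u sum.reindex[OF \<beta>inj, of "\<lambda>v. u v *\<^sub>R v"] by simp
  also have "\<dots> = V z" unfolding V_def z_def by simp
  finally show ?thesis using that[of z] by (simp add: z_def)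
qed

lemma finite_int_ball: "finite {x::real^'k. x \<in> int_vecs \<and> norm x \<le> B}"
proof -
  define A where "A = PiE (UNIV::'k set) (\<lambda>_. {-\<lceil>B\<rceil>..\<lceil>B\<rceil>})"
  have "{x::real^'k. x \<in> int_vecs \<and> norm x \<le> B} \<subseteq> (\<lambda>f. \<chi> i. real_of_int (f i)) ` A"
  proof
    fix x :: "real^'k" assume x: "x \<in> {x. x \<in> int_vecs \<and> norm x \<le> B}"
    define f where "f i = \<lfloor>x$i\<rfloor>" for i
    have xi: "x$i = of_int \<lfloor>x$i\<rfloor>" for i using x unfolding int_vecs_def by simp
    have "\<bar>x$i\<bar> \<le> B" for i using x component_le_norm_cart[of x i] by auto
    then have "f i \<in> {-\<lceil>B\<rceil>..\<lceil>B\<rceil>}" for i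
    proof -
      have "- B \<le> x$i" "x$i \<le> B" using \<open>\<bar>x$i\<bar> \<le> B\<close> by auto
      then have "\<lfloor>- B\<rfloor> \<le> \<lfloor>x$i\<rfloor>" "\<lfloor>x$i\<rfloor> \<le> \<lceil>B\<rceil>"
        using floor_mono floor_le_ceiling order_trans by blast+
      then show ?thesis unfolding f_def by (simp add: floor_minus)
    qed
    then have "f \<in> A" unfolding A_def by (auto simp: PiE_def extensional_def)
    moreover have "x = (\<chi> i. real_of_int (f i))" using xi by (simp add: vec_eq_iff f_def)
    ultimately show "x \<in> (\<lambda>f. \<chi> i. real_of_int (f i)) ` A" by blast
  qed
  moreover have "finite A" unfolding A_def by (intro finite_PiE) auto
  ultimately show ?thesis by (meson finite_imageI finite_subset)
qed

lemma floor_frac_int: assumes "t \<in> \<int>" "0 \<le> s" "s < 1" shows "\<lfloor>s + t\<rfloor> = \<lfloor>t\<rfloor>"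
proof -
  obtain k where k: "t = of_int k" using assms(1) Ints_cases by blast
  show ?thesis using assms k by (simp add: floor_unique)
qed

lemma decomp_ex:
  assumes y: "y \<in> W \<inter> L"
  obtains r t where "r \<in> Rset" "t \<in> Tset" "y = r + V t"
proof -
  obtain z where z: "\<forall>i. i \<notin> S \<longrightarrow> z$i = 0" "y = V z" using V_surj y by blast
  define t :: "real^'k" where "t = (\<chi> i. if i \<in> S then of_int \<lfloor>z$i\<rfloor> else 0)"
  have tT: "t \<in> Tset" unfolding t_def Tset_def by auto
  define r where "r = y - V t"
  have "r = V (z - t)" using z by (simp add: r_def)
  moreover have "\<forall>i\<in>S. 0 \<le> (z - t)$i \<and> (z - t)$i < 1"
  proof
    fix i assume "i \<in> S"
    then have "(z - t)$i = z$i - of_int \<lfloor>z$i\<rfloor>" unfolding t_def by simp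
    moreover have "of_int \<lfloor>z$i\<rfloor> \<le> z$i" "z$i < of_int \<lfloor>z$i\<rfloor> + 1"
      by (rule of_int_floor_le, rule real_of_int_floor_add_one_gt)
    ultimately show "0 \<le> (z - t)$i \<and> (z - t)$i < 1" by linarith
  qed
  moreover have "r \<in> W" unfolding r_def using y V_W subspace_W
    by (simp add: subspace_diff)
  moreover have "r \<in> L" unfolding r_def using y V_L[OF tT] L_diff by auto
  ultimately have "r \<in> Rset" unfolding Rset_def by blast
  moreover have "y = r + V t" by (simp add: r_def)
  ultimately show ?thesis using that tT by blast
qed

lemma decomp_closed: "r \<in> Rset \<Longrightarrow> t \<in> Tset \<Longrightarrow> r + V t \<in> W \<inter> L"
  unfolding Rset_def using V_W V_L L_add subspace_W by (auto simp: subspace_add)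

lemma decomp_uniq:
  assumes r: "r \<in> Rset" "r' \<in> Rset" and t: "t \<in> Tset" "t' \<in> Tset"
    and eq: "r + V t = r' + V t'"
  shows "r = r' \<and> t = t'"
proof -
  obtain s where s: "\<forall>i\<in>S. 0 \<le> s$i \<and> s$i < 1" "r = V s" using r(1) unfolding Rset_def by blast
  obtain s' where s': "\<forall>i\<in>S. 0 \<le> s'$i \<and> s'$i < 1" "r' = V s'" using r(2) unfolding Rset_def by blast
  define u where "u = (\<chi> i. if i \<in> S then (s + t - s' - t')$i else 0)"
  have "V u = V (s + t - s' - t')" unfolding u_def by (rule V_cong) simp
  also have "\<dots> = 0" using eq s s' by (simp add: algebra_simps)
  finally have "u = 0" using V_inj[of u] unfolding u_def by simp
  then have si: "s$i + t$i = s'$i + t'$i" if "i \<in> S" for i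
  proof -
    have "u$i = 0" using \<open>u = 0\<close> by simp
    then show ?thesis using that unfolding u_def by simp
  qed
  have "t$i = t'$i" for i
  proof (cases "i \<in> S")
    case True
    have "\<lfloor>s$i + t$i\<rfloor> = \<lfloor>t$i\<rfloor>" using s t True by (intro floor_frac_int) (auto simp: Tset_def)
    moreover have "\<lfloor>s'$i + t'$i\<rfloor> = \<lfloor>t'$i\<rfloor>" using s' t True by (intro floor_frac_int) (auto simp: Tset_def)
    ultimately have "\<lfloor>t$i\<rfloor> = \<lfloor>t'$i\<rfloor>" using si[OF True] by simp
    moreover have "t$i \<in> \<int>" "t'$i \<in> \<int>" using t True by (auto simp: Tset_def)
    ultimately show ?thesis by (metis Ints_cases floor_of_int)
  next
    case False then show ?thesis using t by (simp add: Tset_def)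
  qed
  then have "t = t'" by (simp add: vec_eq_iff)
  then show ?thesis using eq by simp
qed

lemma Rset_finite: "finite Rset"
proof -
  define B where "B = (\<Sum>i\<in>S. norm (\<beta> i))"
  have "Rset \<subseteq> {x. x \<in> int_vecs \<and> norm x \<le> B}"
  proof
    fix r assume "r \<in> Rset"
    then obtain s where s: "\<forall>i\<in>S. 0 \<le> s$i \<and> s$i < 1" "r = V s" "r \<in> L" unfolding Rset_def by blast
    have "norm r \<le> (\<Sum>i\<in>S. norm (s$i *\<^sub>R \<beta> i))" unfolding s(2) V_def by (rule norm_sum)
    also have "\<dots> \<le> B" unfolding B_def
      using s(1) by (intro sum_mono) (auto intro!: mult_left_le_one_le)
    finally show "r \<in> {x. x \<in> int_vecs \<and> norm x \<le> B}" using s(3) L_int by auto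
  qed
  then show ?thesis using finite_int_ball finite_subset by blast
qed

lemma zero_Rset: "0 \<in> Rset"
  unfolding Rset_def using subspace_W L_zero by (auto simp: subspace_0 intro!: exI[of _ 0])

end

lemma vec_set_bij:
  "bij_betw (\<lambda>h::'a^'k::finite. \<lambda>i. h$i) {h. \<forall>i. h$i \<in> A i} (PiE UNIV A)"
proof (rule bij_betwI[where g = "\<lambda>f. \<chi> i. f i"])
  show "(\<lambda>h::'a^'k. \<lambda>i. h$i) \<in> {h. \<forall>i. h$i \<in> A i} \<rightarrow> PiE UNIV A" by auto
  show "(\<lambda>f. \<chi> i. f i) \<in> PiE UNIV A \<rightarrow> {h::'a^'k. \<forall>i. h$i \<in> A i}" by auto
  show "(\<chi> i. x $ i) = x" for x :: "'a^'k" by (simp add: vec_eq_iff)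
  show "(\<lambda>i. (\<chi> i. y i) $ i) = y" if "y \<in> PiE UNIV A" for y using that by auto
qed

lemma card_vec_set:
  assumes "\<And>i. finite (A i)"
  shows "card {h::'a^'k::finite. \<forall>i. h$i \<in> A i} = (\<Prod>i\<in>UNIV. card (A i))"
  using bij_betw_same_card[OF vec_set_bij[of A]] assms by (simp add: card_PiE)

lemma finite_vec_set:
  assumes "\<And>i. finite (A i)"
  shows "finite {h::'a^'k::finite. \<forall>i. h$i \<in> A i}"
  using bij_betw_finite[OF vec_set_bij[of A]] assms by (simp add: finite_PiE)

lemma finite_nat_vec_bounded: "finite {h::nat^'k::finite. \<forall>i. h$i \<le> M}"
  using finite_vec_set[of "\<lambda>_. {..M}"] by simp

lemma dotn_scale: "dotn (c *\<^sub>R y) h = c * dotn y h"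
  unfolding dotn_def by (simp add: sum_distrib_left mult.assoc)

lemma dotn_term_le:
  assumes "\<forall>i. 0 < y$i"
  shows "y$i * real (h$i) \<le> dotn y h"
  unfolding dotn_def using assms
  by (intro member_le_sum) (auto intro!: mult_nonneg_nonneg simp: less_imp_le)

lemma dotn_sum_le:
  assumes "\<forall>i. 0 < y$i" "\<forall>i. 1 \<le> h$i"
  shows "(\<Sum>i\<in>UNIV. y$i) \<le> dotn y h"
  unfolding dotn_def
proof (intro sum_mono)
  fix i
  have "1 \<le> real (h$i)" using assms by simp
  then show "y$i \<le> y$i * real (h$i)"
    using mult_left_mono[of 1 "real (h$i)" "y$i"] assms by (simp add: less_imp_le)
qed

lemma norm_le_sum_pos:
  assumes "\<forall>i. 0 < y$i"
  shows "norm y \<le> (\<Sum>i\<in>UNIV. y$i)"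
  using norm_le_l1_cart[of y] assms by (simp add: less_imp_le)

lemma finite_dotn_set:
  assumes pos: "\<forall>i. 0 < y$i"
  shows "finite {h::nat^'k::finite. (\<forall>i. 1 \<le> h$i) \<and> dotn y h \<le> B}"
proof -
  define M where "M = nat \<lceil>B * (\<Sum>i\<in>UNIV. 1 / y$i)\<rceil>"
  have "{h::nat^'k. (\<forall>i. 1 \<le> h$i) \<and> dotn y h \<le> B} \<subseteq> {h. \<forall>i. h$i \<le> M}"
  proof safe
    fix h :: "nat^'k" and i assume h: "\<forall>i. 1 \<le> h$i" "dotn y h \<le> B"
    have "y$i * real (h$i) \<le> B" using dotn_term_le[OF pos, of i h] h by simp
    then have hi: "real (h$i) \<le> B / y$i" using pos by (simp add: field_simps mult.commute)
    have "B / y$i \<le> B * (\<Sum>i\<in>UNIV. 1 / y$i)"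
    proof -
      have "1 \<le> real (h$i)" using h by simp
      then have "0 < B / y$i" using hi by linarith
      then have B0: "0 \<le> B" using pos[rule_format, of i] by (auto simp: zero_less_divide_iff)
      have "1 / y$i \<le> (\<Sum>i\<in>UNIV. 1 / y$i)" using pos
        by (intro member_le_sum) (auto simp: less_imp_le)
      then show ?thesis using B0 by (simp add: divide_inverse mult_left_mono)
    qed
    then have "real (h$i) \<le> real M" unfolding M_def using hi
      by (smt (verit) of_nat_nat real_nat_ceiling_ge)
    then show "h$i \<le> M" by simp
  qed
  then show ?thesis using finite_nat_vec_bounded finite_subset by blast
qed

context ws
begin

lemma pG_set_finite: "y \<in> C \<Longrightarrow> finite {h::nat^'k. (\<forall>i. 1 \<le> h$i) \<and> dotn y h \<le> B}"
  using finite_dotn_set C_pos by blast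

lemma pG_nz_sum:
  assumes y: "y \<in> C" and "pG y \<noteq> 0"
  shows "(\<Sum>i\<in>UNIV. y$i) \<le> 1"
proof -
  obtain h where h: "\<forall>i. 1 \<le> h$i" "dotn y h \<le> 1"
    using assms(2) unfolding pG_def by (metis (mono_tags, lifting) card.empty empty_Collect_eq)
  then show ?thesis using dotn_sum_le[of y h] C_pos[OF y] by auto
qed

lemma Phi_nz: assumes "\<Phi> y \<noteq> 0" shows "y \<in> C" "(\<Sum>i\<in>UNIV. y$i) \<le> 1" "norm y \<le> 1"
proof -
  show yC: "y \<in> C" using assms unfolding \<Phi>_def by (auto split: if_splits)
  then have "pG y \<noteq> 0" using assms unfolding \<Phi>_def by auto
  then show s: "(\<Sum>i\<in>UNIV. y$i) \<le> 1" using pG_nz_sum yC by blast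
  show "norm y \<le> 1" using norm_le_sum_pos[of y] C_pos[OF yC] s by auto
qed

lemma pG_ge1:
  assumes y: "y \<in> C" and s: "(\<Sum>i\<in>UNIV. y$i) \<le> 1"
  shows "1 \<le> pG y"
proof -
  define one :: "nat^'k" where "one = (\<chi> i. 1)"
  have "dotn y one = (\<Sum>i\<in>UNIV. y$i)" unfolding dotn_def one_def by simp
  then have "one \<in> {h::nat^'k. (\<forall>i. 1 \<le> h$i) \<and> dotn y h \<le> 1}" using s by (simp add: one_def)
  then have "{h::nat^'k. (\<forall>i. 1 \<le> h$i) \<and> dotn y h \<le> 1} \<noteq> {}" by blast
  then show ?thesis unfolding pG_def using pG_set_finite[OF y, of 1]
    by (simp add: Suc_le_eq card_gt_0_iff)
qed

lemma pp_nonneg: "y \<in> C \<Longrightarrow> 0 \<le> pp y"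
  unfolding pp_def using C_pos by (intro prod_nonneg) (auto simp: less_imp_le)

lemma pp_scale: "pp (c *\<^sub>R y) = c ^ (\<Sum>i\<in>UNIV. m i) * pp y"
  unfolding pp_def by (simp add: power_mult_distrib prod.distrib power_sum)

lemma Phi_nonneg: "0 \<le> \<Phi> y"
  unfolding \<Phi>_def using pp_nonneg by auto

lemma Phi_le1: "\<Phi> y \<le> 1"
proof (cases "\<Phi> y = 0")
  case True then show ?thesis by simp
next
  case False
  have yC: "y \<in> C" and s: "(\<Sum>i\<in>UNIV. y$i) \<le> 1" using Phi_nz[OF False] by auto
  have pos: "\<forall>i. 0 < y$i" using C_pos[OF yC] by auto
  have yle: "y$i \<le> 1" for i
  proof -
    have "y$i \<le> (\<Sum>i\<in>UNIV. y$i)" using pos by (intro member_le_sum) (auto simp: less_imp_le)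
    then show ?thesis using s by simp
  qed
  define A where "A i = {1..nat \<lfloor>1 / y$i\<rfloor>}" for i
  have sub: "{h::nat^'k. (\<forall>i. 1 \<le> h$i) \<and> dotn y h \<le> 1} \<subseteq> {h. \<forall>i. h$i \<in> A i}"
  proof safe
    fix h :: "nat^'k" and i assume h: "\<forall>i. 1 \<le> h$i" "dotn y h \<le> 1"
    have "y$i * real (h$i) \<le> 1" using dotn_term_le[OF pos, of i h] h by simp
    then have "real (h$i) \<le> 1 / y$i" using pos by (simp add: field_simps mult.commute)
    then have "h$i \<le> nat \<lfloor>1 / y$i\<rfloor>" by (simp add: le_nat_floor)
    then show "h$i \<in> A i" using h unfolding A_def by auto
  qed
  have "real (pG y) \<le> real (card {h::nat^'k. \<forall>i. h$i \<in> A i})"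
    unfolding pG_def using card_mono[OF finite_vec_set sub] A_def by simp
  also have "\<dots> = (\<Prod>i\<in>UNIV. real (nat \<lfloor>1 / y$i\<rfloor>))"
    using card_vec_set[of A] unfolding A_def by simp
  also have "\<dots> \<le> (\<Prod>i\<in>UNIV. 1 / y$i)"
    by (intro prod_mono) (use pos in \<open>auto simp: less_imp_le\<close>)
  finally have G: "real (pG y) \<le> (\<Prod>i\<in>UNIV. 1 / y$i)" .
  have P: "pp y \<le> (\<Prod>i\<in>UNIV. y$i)"
    unfolding pp_def
  proof (intro prod_mono conjI)
    fix i
    show "0 \<le> y$i ^ m i" using pos by (simp add: less_imp_le)
    show "y$i ^ m i \<le> y$i" using power_decreasing[of 1 "m i" "y$i"] mpos pos yle
      by (simp add: less_imp_le Suc_leI)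
  qed
  have "\<Phi> y = pp y * real (pG y)" using yC by (simp add: \<Phi>_def)
  also have "\<dots> \<le> (\<Prod>i\<in>UNIV. y$i) * (\<Prod>i\<in>UNIV. 1 / y$i)"
    using P G pp_nonneg[OF yC] by (intro mult_mono) (auto intro: prod_nonneg simp: pos less_imp_le)
  also have "\<dots> = (\<Prod>i\<in>UNIV. y$i * (1 / y$i))" by (rule prod.distrib[symmetric])
  also have "\<dots> = 1"
  proof (rule prod.neutral, rule ballI)
    fix i have "y$i \<noteq> 0" using pos by (metis less_irrefl)
    then show "y$i * (1 / y$i) = 1" by simp
  qed
  finally show ?thesis .
qed

definition YW :: "real \<Rightarrow> (real^'k) set" where
  "YW N = {y \<in> W \<inter> L. norm y \<le> N}"

lemma YW_finite: "finite (YW N)"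
proof -
  have "YW N \<subseteq> {x. x \<in> int_vecs \<and> norm x \<le> N}" unfolding YW_def using L_int by auto
  then show ?thesis using finite_int_ball finite_subset by blast
qed

lemma CL_nat:
  assumes y: "y \<in> C" "y \<in> L"
  shows "real_vec (\<chi> k. nat \<lfloor>y$k\<rfloor>) = y" "\<forall>k. 1 \<le> (\<chi> k. nat \<lfloor>y$k\<rfloor>)$k"
proof -
  have yk: "real (nat \<lfloor>y$k\<rfloor>) = y$k \<and> 1 \<le> nat \<lfloor>y$k\<rfloor>" for k
  proof -
    have "y$k \<in> \<int>" using L_int[OF y(2)] unfolding int_vecs_def by auto
    then obtain z where z: "y$k = of_int z" using Ints_cases by blast
    have "0 < y$k" using C_pos[OF y(1)] .
    then show ?thesis using z by simp
  qed
  show "real_vec (\<chi> k. nat \<lfloor>y$k\<rfloor>) = y" using yk by (simp add: real_vec_def vec_eq_iff)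
  show "\<forall>k. 1 \<le> (\<chi> k. nat \<lfloor>y$k\<rfloor>)$k" using yk by simp
qed

lemma dotn_real_vec: "dotn (real_vec b) h = real (\<Sum>i\<in>UNIV. b$i * h$i)"
  by (simp add: dotn_def real_vec_def)

lemma wall_sum_eq:
  assumes N: "0 < N"
  shows "wall_sum C L m N = N ^ (\<Sum>i\<in>UNIV. m i) * (\<Sum>y\<in>YW N. \<Phi> ((1/N) *\<^sub>R y))"
proof -
  define X where "X = {(b::nat^'k, h::nat^'k). (\<forall>i. 1 \<le> b$i \<and> 1 \<le> h$i) \<and>
        real (\<Sum>i\<in>UNIV. b$i * h$i) \<le> N \<and> real_vec b \<in> C \<inter> L}"
  define Y0 where "Y0 = {y \<in> C \<inter> L. norm y \<le> N}"
  define H where "H y = {h::nat^'k. (\<forall>i. 1 \<le> h$i) \<and> dotn y h \<le> N}" for y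
  have ws: "wall_sum C L m N = (\<Sum>(b,h)\<in>X. \<Prod>i\<in>UNIV. real (b$i) ^ m i)"
    unfolding wall_sum_def X_def by simp
  have nb: "norm y \<le> N" if "y \<in> C" "\<forall>i. 1 \<le> h$i" "dotn y h \<le> N" for y h
    using norm_le_sum_pos[of y] dotn_sum_le[of y h] C_pos[OF that(1)] that by force
  have step1: "(\<Sum>(b,h)\<in>X. \<Prod>i\<in>UNIV. real (b$i) ^ m i) = (\<Sum>(y,h)\<in>Sigma Y0 H. pp y)"
  proof (rule sum.reindex_bij_witness[where i = "\<lambda>(y,h). ((\<chi> k. nat \<lfloor>y$k\<rfloor>), h)"
        and j = "\<lambda>(b,h). (real_vec b, h)"])
    fix a assume a: "a \<in> X"
    obtain b h where ab: "a = (b,h)" by (cases a)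
    have bh: "\<forall>i. 1 \<le> b$i \<and> 1 \<le> h$i" "real (\<Sum>i\<in>UNIV. b$i * h$i) \<le> N" "real_vec b \<in> C \<inter> L"
      using a unfolding ab X_def by auto
    show "(case (case a of (b, h) \<Rightarrow> (real_vec b, h)) of (y, h) \<Rightarrow> (\<chi> k. nat \<lfloor>y $ k\<rfloor>, h)) = a"
      unfolding ab by (simp add: real_vec_def vec_eq_iff)
    show "(case a of (b, h) \<Rightarrow> (real_vec b, h)) \<in> Sigma Y0 H"
      unfolding ab Y0_def H_def using bh nb[of "real_vec b" h] dotn_real_vec[of b h] by auto
    show "(case (case a of (b, h) \<Rightarrow> (real_vec b, h)) of (y, h) \<Rightarrow> pp y) =
          (case a of (b, h) \<Rightarrow> \<Prod>i\<in>UNIV. real (b $ i) ^ m i)"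
      unfolding ab by (simp add: pp_def real_vec_def)
  next
    fix a assume a: "a \<in> Sigma Y0 H"
    obtain y h where ab: "a = (y,h)" by (cases a)
    have yh: "y \<in> C" "y \<in> L" "norm y \<le> N" "\<forall>i. 1 \<le> h$i" "dotn y h \<le> N"
      using a unfolding ab Y0_def H_def by auto
    note cl = CL_nat[OF yh(1,2)]
    show "(case (case a of (y, h) \<Rightarrow> (\<chi> k. nat \<lfloor>y $ k\<rfloor>, h)) of (b, h) \<Rightarrow> (real_vec b, h)) = a"
      unfolding ab using cl by simp
    show "(case a of (y, h) \<Rightarrow> (\<chi> k. nat \<lfloor>y $ k\<rfloor>, h)) \<in> X"
      unfolding ab X_def using cl yh dotn_real_vec[of "\<chi> k. nat \<lfloor>y$k\<rfloor>" h] by auto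
  qed
  have finY0: "finite Y0"
  proof -
    have "Y0 \<subseteq> {x. x \<in> int_vecs \<and> norm x \<le> N}" unfolding Y0_def using L_int by auto
    then show ?thesis using finite_int_ball finite_subset by blast
  qed
  have finH: "\<forall>y\<in>Y0. finite (H y)" unfolding Y0_def H_def using pG_set_finite by auto
  have step2: "(\<Sum>(y,h)\<in>Sigma Y0 H. pp y) = (\<Sum>y\<in>Y0. pp y * real (card (H y)))"
    using sum.Sigma[OF finY0 finH, of "\<lambda>y h. pp y"] by (simp add: mult.commute)
  have step3: "pp y * real (card (H y)) = N ^ (\<Sum>i\<in>UNIV. m i) * \<Phi> ((1/N) *\<^sub>R y)" if y: "y \<in> Y0" for y
  proof -
    have yC: "y \<in> C" using y unfolding Y0_def by auto
    have "H y = {h. (\<forall>i. 1 \<le> h$i) \<and> dotn ((1/N) *\<^sub>R y) h \<le> 1}"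
      unfolding H_def dotn_scale using N by (simp add: divide_le_eq_1)
    then have "card (H y) = pG ((1/N) *\<^sub>R y)" unfolding pG_def by simp
    moreover have "pp y = N ^ (\<Sum>i\<in>UNIV. m i) * pp ((1/N) *\<^sub>R y)"
      using pp_scale[of N "(1/N) *\<^sub>R y"] N by simp
    moreover have "(1/N) *\<^sub>R y \<in> C" using C_scale[of "1/N" y] N yC by simp
    ultimately show ?thesis unfolding \<Phi>_def by simp
  qed
  have step4: "(\<Sum>y\<in>Y0. \<Phi> ((1/N) *\<^sub>R y)) = (\<Sum>y\<in>YW N. \<Phi> ((1/N) *\<^sub>R y))"
  proof (rule sum.mono_neutral_left[OF YW_finite])
    show "Y0 \<subseteq> YW N" unfolding Y0_def YW_def using C_W by auto
    show "\<forall>y\<in>YW N - Y0. \<Phi> ((1/N) *\<^sub>R y) = 0"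
    proof
      fix y assume "y \<in> YW N - Y0"
      then have "y \<notin> C" unfolding YW_def Y0_def by auto
      then have "(1/N) *\<^sub>R y \<notin> C" using C_scale[of "1/N" y] N by simp
      then show "\<Phi> ((1/N) *\<^sub>R y) = 0" unfolding \<Phi>_def by simp
    qed
  qed
  have "(\<Sum>y\<in>Y0. pp y * real (card (H y))) = (\<Sum>y\<in>Y0. N ^ (\<Sum>i\<in>UNIV. m i) * \<Phi> ((1/N) *\<^sub>R y))"
    using step3 by (rule sum.cong[OF refl])
  also have "\<dots> = N ^ (\<Sum>i\<in>UNIV. m i) * (\<Sum>y\<in>YW N. \<Phi> ((1/N) *\<^sub>R y))"
    by (simp add: sum_distrib_left[symmetric] step4)
  finally show ?thesis unfolding ws step1 step2 .
qed

end

context ws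
begin

lemma card_S: "card S = dim W"
proof -
  have "dim W = dim (span (\<beta> ` S))" using \<beta>span by simp
  also have "\<dots> = card (\<beta> ` S)" using dim_span_eq_card_independent[OF \<beta>ind] .
  also have "\<dots> = card S" using card_image[OF \<beta>inj] .
  finally show ?thesis by simp
qed

definition TS :: "real \<Rightarrow> real^'k \<Rightarrow> (real^'k) set" where
  "TS N r = {t \<in> Tset. norm (r + V t) \<le> N}"

lemma TS_finite: assumes r: "r \<in> Rset" shows "finite (TS N r)"
proof -
  have inj: "inj_on (\<lambda>t. r + V t) (TS N r)"
    using decomp_uniq[OF r r] unfolding TS_def inj_on_def by blast
  have "(\<lambda>t. r + V t) ` TS N r \<subseteq> YW N"
    unfolding TS_def YW_def using decomp_closed[OF r] by auto
  then have "finite ((\<lambda>t. r + V t) ` TS N r)" using YW_finite finite_subset by blast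
  then show ?thesis using finite_imageD[OF _ inj] by blast
qed

lemma sum_decomp: "(\<Sum>y\<in>YW N. f y) = (\<Sum>r\<in>Rset. \<Sum>t\<in>TS N r. f (r + V t))"
proof -
  have bij: "bij_betw (\<lambda>(r,t). r + V t) (Sigma Rset (TS N)) (YW N)"
  proof (rule bij_betw_imageI)
    show "inj_on (\<lambda>(r, t). r + V t) (Sigma Rset (TS N))"
      unfolding inj_on_def TS_def using decomp_uniq by auto
    show "(\<lambda>(r, t). r + V t) ` Sigma Rset (TS N) = YW N"
    proof
      show "(\<lambda>(r, t). r + V t) ` Sigma Rset (TS N) \<subseteq> YW N"
        unfolding TS_def YW_def using decomp_closed by auto
      show "YW N \<subseteq> (\<lambda>(r, t). r + V t) ` Sigma Rset (TS N)"
      proof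
        fix y assume y: "y \<in> YW N"
        then obtain r t where rt: "r \<in> Rset" "t \<in> Tset" "y = r + V t"
          using decomp_ex[of y] unfolding YW_def by blast
        then have "(r,t) \<in> Sigma Rset (TS N)" using y unfolding TS_def YW_def by auto
        then show "y \<in> (\<lambda>(r, t). r + V t) ` Sigma Rset (TS N)" using rt by force
      qed
    qed
  qed
  have "(\<Sum>r\<in>Rset. \<Sum>t\<in>TS N r. f (r + V t)) = (\<Sum>(r,t)\<in>Sigma Rset (TS N). f (r + V t))"
    using Rset_finite TS_finite by (intro sum.Sigma) auto
  also have "\<dots> = (\<Sum>y\<in>YW N. f y)"
    using sum.reindex_bij_betw[OF bij, of f] by (simp add: case_prod_beta')
  finally show ?thesis by simp
qed

definition fl :: "real \<Rightarrow> real^'k \<Rightarrow> real^'k" where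
  "fl N z = (\<chi> i. if i \<in> S then of_int \<lfloor>N * z$i\<rfloor> else 0)"

definition Dm :: "real^'k \<Rightarrow> bool" where
  "Dm z \<longleftrightarrow> (\<forall>i. i \<notin> S \<longrightarrow> 0 \<le> z$i \<and> z$i < 1)"

definition cell :: "real \<Rightarrow> real^'k \<Rightarrow> (real^'k) set" where
  "cell N t = {z. Dm z \<and> fl N z = t}"

definition gN :: "real \<Rightarrow> real^'k \<Rightarrow> real^'k \<Rightarrow> real" where
  "gN N r z = \<Phi> ((1/N) *\<^sub>R (r + V (fl N z))) * (if Dm z then 1 else 0)"

lemma fl_T: "fl N z \<in> Tset" unfolding fl_def Tset_def by auto

lemma cell_integral:
  assumes N: "0 < N" and t: "t \<in> Tset"
  shows "((\<lambda>z. indicator (cell N t) z :: real) has_integral (1/N) ^ card S) UNIV"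
proof -
  define a :: "real^'k" where "a = (\<chi> i. if i \<in> S then t$i / N else 0)"
  define b :: "real^'k" where "b = (\<chi> i. if i \<in> S then (t$i + 1) / N else 1)"
  have tint: "t$i \<in> \<int>" if "i \<in> S" for i using t that unfolding Tset_def by auto
  have t0: "t$i = 0" if "i \<notin> S" for i using t that unfolding Tset_def by auto
  have box_sub: "box a b \<subseteq> cell N t"
  proof
    fix z assume z: "z \<in> box a b"
    have zi: "a$i < z$i \<and> z$i < b$i" for i using z mem_box_cart(1) by blast
    have "fl N z $ i = t $ i" for i
    proof (cases "i \<in> S")
      case True
      obtain k where k: "t$i = of_int k" using tint[OF True] Ints_cases by blast
      have "t$i / N < z$i" "z$i < (t$i + 1) / N" using zi[of i] True unfolding a_def b_def by auto
      then have "t$i < N * z$i" "N * z$i < t$i + 1" using N by (auto simp: field_simps)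
      then have "\<lfloor>N * z$i\<rfloor> = k" using k by (intro floor_unique) auto
      then show ?thesis using True k unfolding fl_def by simp
    next
      case False then show ?thesis using t0 unfolding fl_def by simp
    qed
    moreover have "Dm z" unfolding Dm_def
    proof (intro allI impI)
      fix i assume i: "i \<notin> S"
      then show "0 \<le> z$i \<and> z$i < 1" using zi[of i] unfolding a_def b_def by auto
    qed
    ultimately show "z \<in> cell N t" unfolding cell_def by (simp add: vec_eq_iff)
  qed
  have cell_sub: "cell N t \<subseteq> cbox a b"
  proof
    fix z assume z: "z \<in> cell N t"
    have "a$i \<le> z$i \<and> z$i \<le> b$i" for i
    proof (cases "i \<in> S")
      case True
      have "of_int \<lfloor>N * z$i\<rfloor> = t$i" using z True unfolding cell_def fl_def by auto
      then have "t$i \<le> N * z$i" "N * z$i \<le> t$i + 1"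
        by (metis of_int_floor_le, metis real_of_int_floor_add_one_gt less_imp_le)
      then show ?thesis using True N unfolding a_def b_def by (auto simp: field_simps)
    next
      case False then show ?thesis using z unfolding cell_def Dm_def a_def b_def by auto
    qed
    then show "z \<in> cbox a b" using mem_box_cart(2) by blast
  qed
  have ab: "a$i \<le> b$i" for i unfolding a_def b_def using N by (auto simp: divide_right_mono)
  then have "a \<in> cbox a b" using mem_box_cart(2) by blast
  then have ne: "cbox a b \<noteq> {}" by blast
  have "measure lborel (cbox a b) = (\<Prod>i\<in>UNIV. b$i - a$i)" using content_cbox_cart[OF ne] .
  also have "\<dots> = (\<Prod>i\<in>UNIV. if i \<in> S then 1 / N else 1)"
    unfolding a_def b_def using N by (intro prod.cong) (auto simp: field_simps)
  also have "\<dots> = (1/N) ^ card S"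
    by (simp add: prod.If_cases Int_def)
  finally have content: "measure lborel (cbox a b) = (1/N) ^ card S" .
  have "((\<lambda>x. 1::real) has_integral (1/N) ^ card S) (cbox a b)"
    using has_integral_const[of "1::real" a b] content by simp
  then have I: "((\<lambda>x. if x \<in> cbox a b then 1::real else 0) has_integral (1/N) ^ card S) UNIV"
    using has_integral_restrict_UNIV[of "cbox a b" "\<lambda>x. 1::real"] by simp
  show ?thesis
  proof (rule has_integral_spike[OF negligible_frontier_interval _ I])
    fix x assume x: "x \<in> UNIV - (cbox a b - box a b)"
    show "indicator (cell N t) x = (if x \<in> cbox a b then 1::real else 0)"
      using x box_sub cell_sub by (auto simp: indicator_def)
  qed
qed

lemma gN_eq:
  assumes N: "0 < N" and r: "r \<in> Rset"
  shows "gN N r z = (\<Sum>t\<in>TS N r. \<Phi> ((1/N) *\<^sub>R (r + V t)) * indicator (cell N t) z)"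
proof (cases "Dm z")
  case False
  then show ?thesis unfolding gN_def cell_def by (simp add: indicator_def)
next
  case True
  have "(\<Sum>t\<in>TS N r. \<Phi> ((1/N) *\<^sub>R (r + V t)) * indicator (cell N t) z) =
        (\<Sum>t\<in>TS N r. if fl N z = t then \<Phi> ((1/N) *\<^sub>R (r + V t)) else 0)"
    using True by (intro sum.cong) (auto simp: cell_def indicator_def)
  also have "\<dots> = (if fl N z \<in> TS N r then \<Phi> ((1/N) *\<^sub>R (r + V (fl N z))) else 0)"
    using TS_finite[OF r] by (rule sum.delta')
  also have "\<dots> = \<Phi> ((1/N) *\<^sub>R (r + V (fl N z)))"
  proof (cases "fl N z \<in> TS N r")
    case False
    have "\<Phi> ((1/N) *\<^sub>R (r + V (fl N z))) = 0"
    proof (rule ccontr)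
      assume "\<Phi> ((1/N) *\<^sub>R (r + V (fl N z))) \<noteq> 0"
      then have "norm ((1/N) *\<^sub>R (r + V (fl N z))) \<le> 1" by (rule Phi_nz)
      moreover have "norm ((1/N) *\<^sub>R (r + V (fl N z))) = norm (r + V (fl N z)) / N"
        unfolding norm_scaleR using N by simp
      ultimately have "norm (r + V (fl N z)) \<le> N" using N by (simp add: divide_le_eq_1)
      then show False using False fl_T unfolding TS_def by auto
    qed
    then show ?thesis by simp
  qed simp
  finally show ?thesis using True unfolding gN_def by simp
qed

lemma gN_integral:
  assumes N: "0 < N" and r: "r \<in> Rset"
  shows "(gN N r has_integral ((1/N) ^ card S * (\<Sum>t\<in>TS N r. \<Phi> ((1/N) *\<^sub>R (r + V t))))) UNIV"
proof -
  have "((\<lambda>z. \<Sum>t\<in>TS N r. \<Phi> ((1/N) *\<^sub>R (r + V t)) * indicator (cell N t) z) has_integral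
        (\<Sum>t\<in>TS N r. \<Phi> ((1/N) *\<^sub>R (r + V t)) * (1/N) ^ card S)) UNIV"
    using TS_finite[OF r] cell_integral[OF N] unfolding TS_def
    by (intro has_integral_sum has_integral_mult_right) (auto simp: TS_def)
  moreover have "(\<lambda>z. \<Sum>t\<in>TS N r. \<Phi> ((1/N) *\<^sub>R (r + V t)) * indicator (cell N t) z) = gN N r"
    by (rule ext, rule gN_eq[OF N r, symmetric])
  moreover have "(\<Sum>t\<in>TS N r. \<Phi> ((1/N) *\<^sub>R (r + V t)) * (1/N) ^ card S) =
      (1/N) ^ card S * (\<Sum>t\<in>TS N r. \<Phi> ((1/N) *\<^sub>R (r + V t)))"
    by (subst sum_distrib_right[symmetric]) (rule mult.commute)
  ultimately show ?thesis by simp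
qed

lemma wall_sum_integral:
  assumes N: "0 < N"
  shows "wall_sum C L m N = N ^ ((\<Sum>i\<in>UNIV. m i) + dim W) * (\<Sum>r\<in>Rset. integral UNIV (gN N r))"
proof -
  have "wall_sum C L m N = N ^ (\<Sum>i\<in>UNIV. m i) * (\<Sum>r\<in>Rset. \<Sum>t\<in>TS N r. \<Phi> ((1/N) *\<^sub>R (r + V t)))"
    using wall_sum_eq[OF N] sum_decomp[of "\<lambda>y. \<Phi> ((1/N) *\<^sub>R y)" N] by simp
  also have "(\<Sum>r\<in>Rset. \<Sum>t\<in>TS N r. \<Phi> ((1/N) *\<^sub>R (r + V t))) =
             (\<Sum>r\<in>Rset. N ^ card S * integral UNIV (gN N r))"
  proof (rule sum.cong[OF refl])
    fix r assume r: "r \<in> Rset"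
    have "integral UNIV (gN N r) = (1/N) ^ card S * (\<Sum>t\<in>TS N r. \<Phi> ((1/N) *\<^sub>R (r + V t)))"
      using gN_integral[OF N r] by (rule integral_unique)
    then show "(\<Sum>t\<in>TS N r. \<Phi> ((1/N) *\<^sub>R (r + V t))) = N ^ card S * integral UNIV (gN N r)"
      using N by (simp add: power_one_over)
  qed
  finally show ?thesis
    by (simp add: card_S power_add sum_distrib_left mult.assoc)
qed

end

lemma dotn_tendsto [tendsto_intros]:
  "(f \<longlongrightarrow> y) F \<Longrightarrow> ((\<lambda>x. dotn (f x) h) \<longlongrightarrow> dotn y h) F"
  unfolding dotn_def by (intro tendsto_intros)

lemma wall_form_tendsto [tendsto_intros]:
  "(f \<longlongrightarrow> y) F \<Longrightarrow> ((\<lambda>x. wall_form I J (f x)) \<longlongrightarrow> wall_form I J y) F"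
  unfolding wall_form_def by (intro tendsto_intros)

lemma dotn_simps [simp]:
  "dotn (x + y) h = dotn x h + dotn y h" "dotn (c *\<^sub>R x) h = c * dotn x h"
  unfolding dotn_def by (simp_all add: sum.distrib algebra_simps sum_distrib_left)

lemma eventually_sgn:
  fixes f :: "'a \<Rightarrow> real"
  assumes "(f \<longlongrightarrow> a) F" "a \<noteq> 0"
  shows "eventually (\<lambda>x. sgn (f x) = sgn a) F"
proof (cases "a > 0")
  case True
  then have "eventually (\<lambda>x. f x > 0) F" using assms(1) by (rule order_tendstoD(1)[rotated])
  then show ?thesis by eventually_elim (use True in simp)
next
  case False
  then have "a < 0" using assms(2) by simp
  then have "eventually (\<lambda>x. f x < 0) F" using assms(1) by (rule order_tendstoD(2)[rotated])
  then show ?thesis by eventually_elim (use \<open>a < 0\<close> in simp)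
qed

context ws
begin

definition E0 :: "(real^'k) set" where
  "E0 = {y. (\<exists>p\<in>wall_pairs. \<sigma> p \<noteq> 0 \<and> wall_form (fst p) (snd p) y = 0) \<or>
            (\<exists>h::nat^'k. (\<forall>i. 1 \<le> h$i) \<and> dotn y h = 1)}"

lemma pp_tendsto: "(f \<longlongrightarrow> y) net \<Longrightarrow> ((\<lambda>x. pp (f x)) \<longlongrightarrow> pp y) net"
  unfolding pp_def by (intro tendsto_intros)

lemma eventually_C:
  assumes y: "y \<in> C" "y \<notin> E0" and f: "(f \<longlongrightarrow> y) net" and fW: "\<And>x. f x \<in> W"
  shows "eventually (\<lambda>x. f x \<in> C) net"
proof -
  have "\<forall>p\<in>wall_pairs. eventually (\<lambda>x. sgn (wall_form (fst p) (snd p) (f x)) = \<sigma> p) net"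
  proof
    fix p :: "'k set \<times> 'k set" assume p: "p \<in> wall_pairs"
    show "eventually (\<lambda>x. sgn (wall_form (fst p) (snd p) (f x)) = \<sigma> p) net"
    proof (cases "\<sigma> p = 0")
      case True
      then show ?thesis using sigma_zero[OF True p fW] by simp
    next
      case False
      then have nz: "wall_form (fst p) (snd p) y \<noteq> 0" using y p unfolding E0_def by auto
      have sg: "sgn (wall_form (fst p) (snd p) y) = \<sigma> p" using y(1) p C_mem by auto
      show ?thesis using eventually_sgn[OF wall_form_tendsto[OF f, of "fst p" "snd p"] nz] sg by simp
    qed
  qed
  then have "eventually (\<lambda>x. \<forall>p\<in>wall_pairs. sgn (wall_form (fst p) (snd p) (f x)) = \<sigma> p) net"
    by (rule eventually_ball_finite[OF finite_wall_pairs])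
  then show ?thesis by eventually_elim (simp add: C_mem)
qed

lemma eventually_notC:
  assumes y: "y \<in> W" "y \<notin> C" "y \<notin> E0" and f: "(f \<longlongrightarrow> y) net" and fW: "\<And>x. f x \<in> W"
  shows "eventually (\<lambda>x. f x \<notin> C) net"
proof -
  obtain p where p: "p \<in> wall_pairs" "sgn (wall_form (fst p) (snd p) y) \<noteq> \<sigma> p"
    using y(2) C_mem by auto
  have "\<sigma> p \<noteq> 0" using p sigma_zero[OF _ p(1) y(1)] by force
  then have nz: "wall_form (fst p) (snd p) y \<noteq> 0" using y p unfolding E0_def by auto
  have "eventually (\<lambda>x. sgn (wall_form (fst p) (snd p) (f x)) = sgn (wall_form (fst p) (snd p) y)) net"
    using eventually_sgn[OF wall_form_tendsto[OF f] nz] .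
  then show ?thesis
  proof eventually_elim
    case (elim x)
    show ?case
    proof
      assume "f x \<in> C"
      then have "sgn (wall_form (fst p) (snd p) (f x)) = \<sigma> p" using C_mem p(1) by auto
      then show False using elim p(2) by simp
    qed
  qed
qed

lemma eventually_pG:
  assumes y: "y \<in> C" "y \<notin> E0" and f: "(f \<longlongrightarrow> y) net"
  shows "eventually (\<lambda>x. pG (f x) = pG y) net"
proof -
  have pos: "\<forall>i. 0 < y$i" using C_pos[OF y(1)] by auto
  have ev1: "eventually (\<lambda>x. \<forall>i. y$i / 2 < f x $ i) net"
  proof (rule eventually_all_finite)
    fix i
    have "y$i / 2 < y$i" using pos by simp
    then show "eventually (\<lambda>x. y$i / 2 < f x $ i) net"
      using order_tendstoD(1)[OF tendsto_vec_nth[OF f]] by blast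
  qed
  define M where "M = nat \<lceil>\<Sum>i\<in>UNIV. 2 / y$i\<rceil>"
  define H0 where "H0 = {h::nat^'k. \<forall>i. h$i \<le> M}"
  have finH0: "finite H0" unfolding H0_def by (rule finite_nat_vec_bounded)
  have bound: "h \<in> H0" if w: "\<forall>i. y$i / 2 < w$i" and h: "\<forall>i. 1 \<le> h$i" "dotn w h \<le> 1" for w h
  proof -
    have wpos: "\<forall>i. 0 < w$i" using w pos by (metis half_gt_zero less_trans)
    have "h$i \<le> M" for i
    proof -
      have "w$i * real (h$i) \<le> 1" using dotn_term_le[OF wpos, of i h] h by simp
      then have "real (h$i) \<le> 1 / w$i" using wpos by (simp add: field_simps mult.commute)
      also have "\<dots> \<le> 2 / y$i"
      proof -
        have a: "y$i < 2 * w$i" "0 < y$i" using w pos by (auto simp: field_simps)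
        have "1 / w$i = 2 / (2 * w$i)" by simp
        also have "\<dots> \<le> 2 / y$i" using a by (intro divide_left_mono) auto
        finally show ?thesis .
      qed
      also have "\<dots> \<le> (\<Sum>i\<in>UNIV. 2 / y$i)" using pos
        by (intro member_le_sum) (auto simp: less_imp_le)
      also have "\<dots> \<le> real M" unfolding M_def by (rule real_nat_ceiling_ge)
      finally show ?thesis by simp
    qed
    then show ?thesis unfolding H0_def by auto
  qed
  have "\<forall>h\<in>H0. eventually (\<lambda>x. (\<forall>i. 1 \<le> h$i) \<longrightarrow> (dotn (f x) h \<le> 1 \<longleftrightarrow> dotn y h \<le> 1)) net"
  proof
    fix h assume "h \<in> H0"
    show "eventually (\<lambda>x. (\<forall>i. 1 \<le> h$i) \<longrightarrow> (dotn (f x) h \<le> 1 \<longleftrightarrow> dotn y h \<le> 1)) net"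
    proof (cases "\<forall>i. 1 \<le> h$i")
      case True
      then have ne: "dotn y h \<noteq> 1" using y(2) unfolding E0_def by auto
      have t: "((\<lambda>x. dotn (f x) h) \<longlongrightarrow> dotn y h) net" by (rule dotn_tendsto[OF f])
      show ?thesis
      proof (cases "dotn y h < 1")
        case True
        then have "eventually (\<lambda>x. dotn (f x) h < 1) net" using order_tendstoD(2)[OF t] by blast
        then show ?thesis by eventually_elim (use True in auto)
      next
        case False
        then have "1 < dotn y h" using ne by simp
        then have "eventually (\<lambda>x. 1 < dotn (f x) h) net" using order_tendstoD(1)[OF t] by blast
        then show ?thesis by eventually_elim (use \<open>1 < dotn y h\<close> in auto)
      qed
    qed (auto intro: always_eventually)
  qed
  then have ev2: "eventually (\<lambda>x. \<forall>h\<in>H0. (\<forall>i. 1 \<le> h$i) \<longrightarrow> (dotn (f x) h \<le> 1 \<longleftrightarrow> dotn y h \<le> 1)) net"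
    by (rule eventually_ball_finite[OF finH0])
  have yself: "\<forall>i. y$i / 2 < y$i" using pos by simp
  show ?thesis
    using ev1 ev2
  proof eventually_elim
    case (elim x)
    have "{h::nat^'k. (\<forall>i. 1 \<le> h$i) \<and> dotn (f x) h \<le> 1} = {h. (\<forall>i. 1 \<le> h$i) \<and> dotn y h \<le> 1}"
    proof (intro Collect_cong iffI)
      fix h assume h: "(\<forall>i. 1 \<le> h$i) \<and> dotn (f x) h \<le> 1"
      then have "h \<in> H0" using bound[of "f x" h] elim(1) by blast
      then show "(\<forall>i. 1 \<le> h$i) \<and> dotn y h \<le> 1" using elim(2) h by blast
    next
      fix h assume h: "(\<forall>i. 1 \<le> h$i) \<and> dotn y h \<le> 1"
      then have "h \<in> H0" using bound[of y h] yself by blast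
      then show "(\<forall>i. 1 \<le> h$i) \<and> dotn (f x) h \<le> 1" using elim(2) h by blast
    qed
    then show ?case unfolding pG_def by simp
  qed
qed

lemma Phi_tendsto:
  assumes y: "y \<in> W" "y \<notin> E0" and f: "(f \<longlongrightarrow> y) net" and fW: "\<And>x. f x \<in> W"
  shows "((\<lambda>x. \<Phi> (f x)) \<longlongrightarrow> \<Phi> y) net"
proof (cases "y \<in> C")
  case True
  have "((\<lambda>x. pp (f x) * real (pG y)) \<longlongrightarrow> pp y * real (pG y)) net"
    by (intro tendsto_intros pp_tendsto f)
  moreover have "eventually (\<lambda>x. pp (f x) * real (pG y) = \<Phi> (f x)) net"
    using eventually_C[OF True y(2) f fW] eventually_pG[OF True y(2) f]
    by eventually_elim (simp add: \<Phi>_def)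
  ultimately have "((\<lambda>x. \<Phi> (f x)) \<longlongrightarrow> pp y * real (pG y)) net"
    by (rule Lim_transform_eventually)
  then show ?thesis using True by (simp add: \<Phi>_def)
next
  case False
  have "eventually (\<lambda>x. 0 = \<Phi> (f x)) net"
    using eventually_notC[OF y(1) False y(2) f fW] by eventually_elim (simp add: \<Phi>_def)
  then have "((\<lambda>x. \<Phi> (f x)) \<longlongrightarrow> 0) net"
    by (rule Lim_transform_eventually[OF tendsto_const])
  then show ?thesis using False by (simp add: \<Phi>_def)
qed
end

lemma negligible_linear_level:
  fixes \<phi> :: "real^'k::finite \<Rightarrow> real"
  assumes lin: "linear \<phi>" and nz: "(\<exists>z. \<phi> z \<noteq> 0) \<or> c \<noteq> 0"
  shows "negligible {z. \<phi> z = c}"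
proof -
  define a :: "real^'k" where "a = (\<chi> i. \<phi> (axis i 1))"
  have rep: "\<phi> z = a \<bullet> z" for z
  proof -
    have "z = (\<Sum>i\<in>UNIV. z$i *\<^sub>R axis i 1)"
      by (simp add: vec_eq_iff axis_def sum_component if_distrib sum.delta cong del: if_weak_cong)
    then have "\<phi> z = \<phi> (\<Sum>i\<in>UNIV. z$i *\<^sub>R axis i 1)" by simp
    also have "\<dots> = (\<Sum>i\<in>UNIV. z$i * \<phi> (axis i 1))"
      using lin by (simp add: linear_sum linear_scale)
    also have "\<dots> = a \<bullet> z" unfolding a_def inner_vec_def by (simp add: mult.commute)
    finally show ?thesis .
  qed
  have "a \<noteq> 0 \<or> c \<noteq> 0" using nz rep by auto
  then have "negligible {z. a \<bullet> z = c}" by (rule negligible_hyperplane)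
  then show ?thesis using rep by simp
qed

lemma floor_scale_tendsto: "((\<lambda>N::real. of_int \<lfloor>N * x\<rfloor> / N) \<longlongrightarrow> x) at_top"
proof (rule tendsto_sandwich[where f = "\<lambda>N. x - inverse N" and h = "\<lambda>N. x"])
  show "eventually (\<lambda>N. x - inverse N \<le> of_int \<lfloor>N * x\<rfloor> / N) at_top"
    using eventually_gt_at_top[of "0::real"]
  proof eventually_elim
    case (elim N)
    have "N * x < of_int \<lfloor>N * x\<rfloor> + 1" by (rule real_of_int_floor_add_one_gt)
    then have "(N * x - 1) / N \<le> of_int \<lfloor>N * x\<rfloor> / N" using elim
      by (intro divide_right_mono) auto
    moreover have "(N * x - 1) / N = x - inverse N" using elim by (simp add: field_simps)
    ultimately show ?case by simp
  qed
  show "eventually (\<lambda>N. of_int \<lfloor>N * x\<rfloor> / N \<le> x) at_top"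
    using eventually_gt_at_top[of "0::real"]
  proof eventually_elim
    case (elim N)
    have "of_int \<lfloor>N * x\<rfloor> \<le> N * x" by (rule of_int_floor_le)
    then show ?case using elim by (simp add: field_simps)
  qed
  show "((\<lambda>N. x - inverse N) \<longlongrightarrow> x) at_top"
    using tendsto_diff[OF tendsto_const tendsto_inverse_0_at_top[OF filterlim_ident]] by simp
qed simp

context ws
begin

definition Eset :: "(real^'k) set" where "Eset = {z. V z \<in> E0}"

lemma Eset_negligible: "negligible Eset"
proof -
  define P where "P = {p \<in> wall_pairs. \<sigma> p \<noteq> 0}"
  have A: "negligible (\<Union>p\<in>P. {z. wall_form (fst p) (snd p) (V z) = 0})"
  proof (rule negligible_Union)
    show "finite ((\<lambda>p. {z. wall_form (fst p) (snd p) (V z) = 0}) ` P)"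
      unfolding P_def using finite_wall_pairs by simp
  next
    fix T assume "T \<in> (\<lambda>p. {z. wall_form (fst p) (snd p) (V z) = 0}) ` P"
    then obtain p where p: "p \<in> P" "T = {z. wall_form (fst p) (snd p) (V z) = 0}" by blast
    obtain c0 where c0: "c0 \<in> C" using C_nonempty by blast
    obtain z0 where z0: "c0 = V z0" using V_surj[OF C_W[OF c0]] by blast
    have "sgn (wall_form (fst p) (snd p) c0) = \<sigma> p" using c0 p C_mem unfolding P_def by auto
    then have "wall_form (fst p) (snd p) (V z0) \<noteq> 0" using p z0 unfolding P_def by auto
    moreover have "linear (\<lambda>z. wall_form (fst p) (snd p) (V z))" by (rule linearI) simp_all
    ultimately show "negligible T" unfolding p(2) by (intro negligible_linear_level) auto
  qed
  have B: "negligible (\<Union>h. {z. dotn (V z) h = 1})"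
  proof (rule negligible_countable_Union)
    show "countable (range (\<lambda>h. {z. dotn (V z) h = 1}))" by simp
  next
    fix T assume "T \<in> range (\<lambda>h. {z. dotn (V z) h = 1})"
    then obtain h where h: "T = {z. dotn (V z) h = 1}" by blast
    have "linear (\<lambda>z. dotn (V z) h)" by (rule linearI) simp_all
    then show "negligible T" unfolding h by (intro negligible_linear_level) auto
  qed
  have "Eset \<subseteq> (\<Union>p\<in>P. {z. wall_form (fst p) (snd p) (V z) = 0}) \<union> (\<Union>h. {z. dotn (V z) h = 1})"
    unfolding Eset_def E0_def P_def by auto
  then show ?thesis using negligible_Un[OF A B] negligible_subset by blast
qed

definition g0 :: "real^'k \<Rightarrow> real" where
  "g0 z = \<Phi> (V z) * (if Dm z then 1 else 0)"

lemma V_tendsto [tendsto_intros]: "(f \<longlongrightarrow> w) net \<Longrightarrow> ((\<lambda>x. V (f x)) \<longlongrightarrow> V w) net"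
  unfolding V_def by (intro tendsto_intros)

lemma Rset_W: "r \<in> Rset \<Longrightarrow> r \<in> W" unfolding Rset_def by auto

lemma gN_tendsto:
  assumes r: "r \<in> Rset" and z: "z \<notin> Eset"
  shows "((\<lambda>N. gN N r z) \<longlongrightarrow> g0 z) at_top"
proof -
  define zS :: "real^'k" where "zS = (\<chi> i. if i \<in> S then z$i else 0)"
  have fl: "((\<lambda>N. (1/N) *\<^sub>R fl N z) \<longlongrightarrow> zS) at_top"
  proof (rule vec_tendstoI)
    fix i
    show "((\<lambda>N. ((1/N) *\<^sub>R fl N z) $ i) \<longlongrightarrow> zS $ i) at_top"
    proof (cases "i \<in> S")
      case True
      then show ?thesis unfolding fl_def zS_def
        using floor_scale_tendsto[of "z$i"] by (simp add: mult.commute)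
    qed (simp add: fl_def zS_def)
  qed
  have inv: "((\<lambda>N::real. 1/N) \<longlongrightarrow> 0) at_top"
    using tendsto_inverse_0_at_top[OF filterlim_ident] by (simp add: inverse_eq_divide)
  have "((\<lambda>N. (1/N) *\<^sub>R r + V ((1/N) *\<^sub>R fl N z)) \<longlongrightarrow> 0 *\<^sub>R r + V zS) at_top"
    by (intro tendsto_intros inv fl)
  moreover have "V zS = V z" unfolding zS_def by (rule V_cong) simp
  ultimately have t: "((\<lambda>N. (1/N) *\<^sub>R (r + V (fl N z))) \<longlongrightarrow> V z) at_top"
    by (simp add: scaleR_right_distrib)
  have inW: "(1/N) *\<^sub>R (r + V (fl N z)) \<in> W" for N
    using Rset_W[OF r] V_W subspace_W by (simp add: subspace_add subspace_scale)
  have "((\<lambda>N. \<Phi> ((1/N) *\<^sub>R (r + V (fl N z)))) \<longlongrightarrow> \<Phi> (V z)) at_top"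
    using Phi_tendsto[OF V_W _ t inW] z unfolding Eset_def by auto
  then show ?thesis unfolding gN_def g0_def by (intro tendsto_intros)
qed

end

lemma indicator_cbox_has_integral:
  "((indicator (cbox a b) :: real^'k::finite \<Rightarrow> real) has_integral measure lborel (cbox a b)) UNIV"
proof -
  have "((\<lambda>x. 1::real) has_integral measure lborel (cbox a b)) (cbox a b)"
    using has_integral_const[of "1::real" a b] by simp
  then have "((\<lambda>x. if x \<in> cbox a b then 1::real else 0) has_integral measure lborel (cbox a b)) UNIV"
    using has_integral_restrict_UNIV[of "cbox a b" "\<lambda>x. 1::real"] by simp
  moreover have "(\<lambda>x. if x \<in> cbox a b then 1::real else 0) = indicator (cbox a b)"
    by (simp add: fun_eq_iff indicator_def)
  ultimately show ?thesis by simp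
qed

context ws
begin

lemma Phi_scaled_norm:
  assumes N: "0 < N" and nz: "\<Phi> ((1/N) *\<^sub>R x) \<noteq> 0"
  shows "norm x \<le> N"
proof -
  have "norm ((1/N) *\<^sub>R x) \<le> 1" using nz by (rule Phi_nz)
  moreover have "norm ((1/N) *\<^sub>R x) = norm x / N" unfolding norm_scaleR using N by simp
  ultimately show ?thesis using N by (simp add: divide_le_eq_1)
qed

lemma V_below: "\<exists>e>0. \<forall>w. (\<forall>i. i \<notin> S \<longrightarrow> w$i = 0) \<longrightarrow> e * norm w \<le> norm (V w)"
proof -
  define Ss where "Ss = {w::real^'k. \<forall>i. i \<notin> S \<longrightarrow> w$i = 0}"
  have sub: "subspace Ss" unfolding Ss_def subspace_def by auto
  have "\<exists>e>0. \<forall>x\<in>Ss. e * norm x \<le> norm (V x)"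
  proof (rule injective_imp_isometric)
    show "closed Ss" using sub by (rule closed_subspace)
    show "subspace Ss" by (rule sub)
    show "bounded_linear V" using linear_V linear_conv_bounded_linear by blast
    show "\<forall>x\<in>Ss. V x = 0 \<longrightarrow> x = 0" unfolding Ss_def using V_inj by blast
  qed
  then show ?thesis unfolding Ss_def by blast
qed

definition BBK :: "real \<Rightarrow> (real^'k) set" where
  "BBK K = cbox (\<chi> i. if i \<in> S then -K else 0) (\<chi> i. if i \<in> S then K else 1)"

lemma gN_nonneg: "0 \<le> gN N r z" unfolding gN_def using Phi_nonneg by simp
lemma gN_le1: "gN N r z \<le> 1" unfolding gN_def using Phi_le1 Phi_nonneg by simp

lemma gN_dom:
  assumes r: "r \<in> Rset"
  shows "\<exists>K. \<forall>N\<ge>1. \<forall>z. norm (gN N r z) \<le> indicator (BBK K) z"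
proof -
  obtain e where e: "e > 0" "\<And>w. (\<forall>i. i \<notin> S \<longrightarrow> w$i = 0) \<Longrightarrow> e * norm w \<le> norm (V w)"
    using V_below by blast
  define K where "K = (1 + norm r) / e + 1"
  have "norm (gN N r z) \<le> indicator (BBK K) z" if N: "1 \<le> N" for N z
  proof (cases "gN N r z = 0")
    case True then show ?thesis by simp
  next
    case False
    then have Dz: "Dm z" and nz: "\<Phi> ((1/N) *\<^sub>R (r + V (fl N z))) \<noteq> 0"
      unfolding gN_def by (auto split: if_splits)
    have N0: "0 < N" using N by simp
    have n1: "norm (r + V (fl N z)) \<le> N" using Phi_scaled_norm[OF N0 nz] .
    have "norm (V (fl N z)) \<le> norm (r + V (fl N z)) + norm r"
      using norm_triangle_ineq4[of "r + V (fl N z)" r] by simp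
    then have n2: "norm (V (fl N z)) \<le> N + norm r" using n1 by simp
    have "e * norm (fl N z) \<le> norm (V (fl N z))" using e(2)[of "fl N z"] unfolding fl_def by simp
    then have n3: "e * norm (fl N z) \<le> N + norm r" using n2 by simp
    have zi: "-K \<le> z$i \<and> z$i \<le> K" if i: "i \<in> S" for i
    proof -
      have "\<bar>of_int \<lfloor>N * z$i\<rfloor>\<bar> \<le> norm (fl N z)"
        using component_le_norm_cart[of "fl N z" i] i unfolding fl_def by simp
      then have a1: "e * \<bar>of_int \<lfloor>N * z$i\<rfloor>\<bar> \<le> N + norm r"
        using n3 e(1) by (meson mult_left_mono less_imp_le order_trans)
      have a2: "\<bar>N * z$i\<bar> \<le> \<bar>of_int \<lfloor>N * z$i\<rfloor>\<bar> + 1"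
        using of_int_floor_le[of "N * z$i"] real_of_int_floor_add_one_gt[of "N * z$i"] by linarith
      have "1 * norm r \<le> N * norm r" using N by (intro mult_right_mono) auto
      then have a3: "N + norm r \<le> N * (1 + norm r)" by (simp add: algebra_simps)
      have b: "e * \<bar>N * z$i\<bar> \<le> e * \<bar>of_int \<lfloor>N * z$i\<rfloor>\<bar> + e"
        using mult_left_mono[OF a2, of e] e(1) by (simp add: ring_distribs)
      have "e * \<bar>N * z$i\<bar> \<le> N * (1 + norm r) + e"
        using a1 a3 b by linarith
      then have "\<bar>N * z$i\<bar> \<le> N * ((1 + norm r) / e) + 1"
        using e(1) by (simp add: field_simps)
      also have "\<dots> \<le> N * K" unfolding K_def using N by (simp add: algebra_simps)
      finally have "N * \<bar>z$i\<bar> \<le> N * K" by (simp add: abs_mult N0 less_imp_le)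
      then have "\<bar>z$i\<bar> \<le> K" using N0 by simp
      then show ?thesis by auto
    qed
    have "z \<in> BBK K" unfolding BBK_def mem_box_cart(2)
    proof
      fix i show "(\<chi> i. if i \<in> S then -K else 0) $ i \<le> z $ i \<and> z $ i \<le> (\<chi> i. if i \<in> S then K else 1) $ i"
        using zi[of i] Dz unfolding Dm_def by (cases "i \<in> S") (auto simp: less_imp_le)
    qed
    then show ?thesis using gN_le1 gN_nonneg by simp
  qed
  then show ?thesis by blast
qed

end

context ws
begin

definition g0E :: "real^'k \<Rightarrow> real" where
  "g0E z = (if z \<in> Eset then 0 else g0 z)"

lemma gN_seq:
  assumes r: "r \<in> Rset" and Y: "filterlim Y at_top sequentially" and Y1: "\<And>k. 1 \<le> Y k"
  shows "g0E integrable_on UNIV" "(\<lambda>k. integral UNIV (gN (Y k) r)) \<longlonglongrightarrow> integral UNIV g0E"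
proof -
  obtain K where K: "\<And>N z. 1 \<le> N \<Longrightarrow> norm (gN N r z) \<le> indicator (BBK K) z"
    using gN_dom[OF r] by blast
  define fk where "fk k z = (if z \<in> Eset then 0 else gN (Y k) r z)" for k z
  have int: "fk k integrable_on UNIV" for k
  proof -
    have "0 < Y k" using Y1[of k] by simp
    then have "gN (Y k) r integrable_on UNIV" using gN_integral[OF _ r] by blast
    then show ?thesis by (rule integrable_spike[OF _ Eset_negligible]) (simp add: fk_def)
  qed
  have hint: "(indicator (BBK K) :: real^'k \<Rightarrow> real) integrable_on UNIV"
    unfolding BBK_def using indicator_cbox_has_integral by blast
  have bound: "norm (fk k x) \<le> indicator (BBK K) x" for k x
    unfolding fk_def using K[OF Y1[of k], of x] by auto
  have conv: "(\<lambda>k. fk k x) \<longlonglongrightarrow> g0E x" for x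
  proof (cases "x \<in> Eset")
    case True then show ?thesis by (simp add: fk_def g0E_def)
  next
    case False
    have "(\<lambda>k. gN (Y k) r x) \<longlonglongrightarrow> g0 x"
      using filterlim_compose[OF gN_tendsto[OF r False] Y] .
    then show ?thesis using False by (simp add: fk_def g0E_def)
  qed
  show "g0E integrable_on UNIV"
    using dominated_convergence(1)[OF int hint bound conv] .
  have lim: "(\<lambda>k. integral UNIV (fk k)) \<longlonglongrightarrow> integral UNIV g0E"
    using dominated_convergence(2)[OF int hint bound conv] .
  have "integral UNIV (fk k) = integral UNIV (gN (Y k) r)" for k
    by (rule integral_spike[OF Eset_negligible]) (simp add: fk_def)
  then show "(\<lambda>k. integral UNIV (gN (Y k) r)) \<longlonglongrightarrow> integral UNIV g0E" using lim by simp
qed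

lemma g0E_integrable: "g0E integrable_on UNIV"
proof -
  have "filterlim (\<lambda>k. real (Suc k)) at_top sequentially"
    by (rule filterlim_compose[OF filterlim_real_sequentially filterlim_Suc])
  then show ?thesis using gN_seq(1)[OF zero_Rset] by simp
qed

lemma gN_lim:
  assumes r: "r \<in> Rset"
  shows "((\<lambda>N. integral UNIV (gN N r)) \<longlongrightarrow> integral UNIV g0E) at_top"
proof (rule tendsto_at_topI_sequentially)
  fix X :: "nat \<Rightarrow> real" assume X: "filterlim X at_top sequentially"
  then have "eventually (\<lambda>k. 1 \<le> X k) sequentially" using filterlim_at_top by blast
  then obtain k0 where k0: "\<And>k. k \<ge> k0 \<Longrightarrow> 1 \<le> X k" unfolding eventually_sequentially by blast
  have Y: "filterlim (\<lambda>k. X (k + k0)) at_top sequentially"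
    by (rule filterlim_compose[OF X filterlim_add_const_nat_at_top])
  have "(\<lambda>k. integral UNIV (gN (X (k + k0)) r)) \<longlonglongrightarrow> integral UNIV g0E"
    using gN_seq(2)[OF r Y] k0 by simp
  then show "(\<lambda>k. integral UNIV (gN (X k) r)) \<longlonglongrightarrow> integral UNIV g0E"
    by (rule LIMSEQ_offset)
qed

lemma main_lim:
  "((\<lambda>N. wall_sum C L m N / N ^ ((\<Sum>i\<in>UNIV. m i) + dim W)) \<longlongrightarrow>
      real (card Rset) * integral UNIV g0E) at_top"
proof -
  have "((\<lambda>N. \<Sum>r\<in>Rset. integral UNIV (gN N r)) \<longlongrightarrow> (\<Sum>r\<in>Rset. integral UNIV g0E)) at_top"
    by (intro tendsto_sum gN_lim)
  moreover have "eventually (\<lambda>N. (\<Sum>r\<in>Rset. integral UNIV (gN N r)) =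
      wall_sum C L m N / N ^ ((\<Sum>i\<in>UNIV. m i) + dim W)) at_top"
    using eventually_gt_at_top[of "0::real"]
    by eventually_elim (simp add: wall_sum_integral)
  ultimately show ?thesis by (simp add: Lim_transform_eventually)
qed

lemma eventually_C2:
  assumes y: "y \<in> C" and f: "(f \<longlongrightarrow> y) net" and fW: "\<And>x. f x \<in> W"
  shows "eventually (\<lambda>x. f x \<in> C) net"
proof -
  have "\<forall>p\<in>wall_pairs. eventually (\<lambda>x. sgn (wall_form (fst p) (snd p) (f x)) = \<sigma> p) net"
  proof
    fix p :: "'k set \<times> 'k set" assume p: "p \<in> wall_pairs"
    show "eventually (\<lambda>x. sgn (wall_form (fst p) (snd p) (f x)) = \<sigma> p) net"
    proof (cases "\<sigma> p = 0")
      case True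
      then show ?thesis using sigma_zero[OF True p fW] by simp
    next
      case False
      have sg: "sgn (wall_form (fst p) (snd p) y) = \<sigma> p" using y(1) p C_mem by auto
      then have nz: "wall_form (fst p) (snd p) y \<noteq> 0" using False by auto
      show ?thesis using eventually_sgn[OF wall_form_tendsto[OF f, of "fst p" "snd p"] nz] sg by simp
    qed
  qed
  then have "eventually (\<lambda>x. \<forall>p\<in>wall_pairs. sgn (wall_form (fst p) (snd p) (f x)) = \<sigma> p) net"
    by (rule eventually_ball_finite[OF finite_wall_pairs])
  then show ?thesis by eventually_elim (simp add: C_mem)
qed

lemma g0E_pos: "0 < integral UNIV g0E"
proof -
  obtain c0 where c0: "c0 \<in> C" using C_nonempty by blast
  define s0 where "s0 = (\<Sum>i\<in>UNIV. c0$i)"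
  have s0: "0 < s0" unfolding s0_def using C_pos[OF c0] by (intro sum_pos) auto
  define c1 where "c1 = (1 / (2 * s0)) *\<^sub>R c0"
  have c1C: "c1 \<in> C" unfolding c1_def using C_scale[of "1 / (2 * s0)" c0] c0 s0 by simp
  have "(\<Sum>i\<in>UNIV. c1$i) = (\<Sum>i\<in>UNIV. (1 / (2 * s0)) * c0$i)" by (simp add: c1_def)
  also have "\<dots> = (1 / (2 * s0)) * s0" by (simp add: sum_distrib_left s0_def)
  also have "\<dots> = 1/2" using s0 by simp
  finally have c1s: "(\<Sum>i\<in>UNIV. c1$i) = 1/2" .
  have ppc1: "0 < pp c1" unfolding pp_def using C_pos[OF c1C] by (intro prod_pos) auto
  obtain z1 where z1: "c1 = V z1" using V_surj[OF C_W[OF c1C]] by blast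
  define z2 :: "real^'k" where "z2 = (\<chi> i. if i \<in> S then z1$i else 1/2)"
  have Vz2: "V z2 = c1" unfolding z1 z2_def by (rule V_cong) simp
  define Q where "Q z \<longleftrightarrow> V z \<in> C \<and> (\<Sum>i\<in>UNIV. (V z)$i) < 1 \<and> pp c1 / 2 < pp (V z) \<and>
      (\<forall>i. i \<notin> S \<longrightarrow> 0 < z$i \<and> z$i < 1)" for z
  have t: "((\<lambda>z. V z) \<longlongrightarrow> c1) (at z2)" using V_tendsto[OF tendsto_ident_at, of z2 UNIV] Vz2 by simp
  have ev1: "eventually (\<lambda>z. V z \<in> C) (at z2)" using eventually_C2[OF c1C t V_W] .
  have "((\<lambda>z. \<Sum>i\<in>UNIV. (V z)$i) \<longlongrightarrow> (\<Sum>i\<in>UNIV. c1$i)) (at z2)" by (intro tendsto_intros t)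
  then have ev2: "eventually (\<lambda>z. (\<Sum>i\<in>UNIV. (V z)$i) < 1) (at z2)"
    using c1s by (intro order_tendstoD(2)) auto
  have ev3: "eventually (\<lambda>z. pp c1 / 2 < pp (V z)) (at z2)"
    using pp_tendsto[OF t] ppc1 by (intro order_tendstoD(1)) auto
  have ev4: "eventually (\<lambda>z. \<forall>i. i \<notin> S \<longrightarrow> 0 < z$i \<and> z$i < 1) (at z2)"
  proof (rule eventually_all_finite)
    fix i
    show "eventually (\<lambda>z. i \<notin> S \<longrightarrow> 0 < z$i \<and> z$i < 1) (at z2)"
    proof (cases "i \<in> S")
      case False
      have tid: "((\<lambda>z::real^'k. z) \<longlongrightarrow> z2) (at z2)" by (rule tendsto_ident_at)
      have "((\<lambda>z. z$i) \<longlongrightarrow> z2$i) (at z2)" using tendsto_vec_nth[OF tid] .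
      then have ti: "((\<lambda>z. z$i) \<longlongrightarrow> 1/2) (at z2)" using False by (simp add: z2_def)
      have "eventually (\<lambda>z. 0 < z$i) (at z2)" using ti by (intro order_tendstoD(1)) auto
      moreover have "eventually (\<lambda>z. z$i < 1) (at z2)" using ti by (intro order_tendstoD(2)) auto
      ultimately show ?thesis by eventually_elim auto
    qed simp
  qed
  have "eventually Q (at z2)" using ev1 ev2 ev3 ev4 unfolding Q_def by eventually_elim auto
  then obtain d where d: "d > 0" "\<And>x. x \<noteq> z2 \<Longrightarrow> dist x z2 < d \<Longrightarrow> Q x"
    unfolding eventually_at by auto
  have Qz2: "Q z2" unfolding Q_def Vz2 using c1C c1s ppc1 by (simp add: z2_def)
  have Qd: "Q x" if "dist x z2 < d" for x using d Qz2 that by (cases "x = z2") auto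
  define k where "k = real CARD('k)"
  have k0: "0 < k" unfolding k_def by simp
  define \<eta> where "\<eta> = d / (2 * k)"
  have eta: "0 < \<eta>" unfolding \<eta>_def using d k0 by simp
  define B0 where "B0 = cbox (z2 - (\<chi> i. \<eta>)) (z2 + (\<chi> i. \<eta>))"
  have B0Q: "Q z" if z: "z \<in> B0" for z
  proof -
    have zi: "\<bar>(z - z2)$i\<bar> \<le> \<eta>" for i using z unfolding B0_def mem_box_cart(2) by (auto simp: abs_le_iff) (smt (verit))+
    have "dist z z2 \<le> (\<Sum>i\<in>UNIV. \<bar>(z - z2)$i\<bar>)" unfolding dist_norm by (rule norm_le_l1_cart)
    also have "\<dots> \<le> (\<Sum>i\<in>(UNIV::'k set). \<eta>)" using zi by (intro sum_mono) auto
    also have "\<dots> = k * \<eta>" unfolding k_def by simp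
    also have "\<dots> < d" unfolding \<eta>_def using k0 d by (simp add: field_simps)
    finally show ?thesis by (rule Qd)
  qed
  have ne: "cbox (z2 - (\<chi> i. \<eta>)) (z2 + (\<chi> i. \<eta>)) \<noteq> {}"
  proof -
    have "z2 \<in> cbox (z2 - (\<chi> i. \<eta>)) (z2 + (\<chi> i. \<eta>))" unfolding mem_box_cart(2) using eta by simp
    then show ?thesis by blast
  qed
  have mB0: "0 < measure lborel B0"
  proof -
    have "measure lborel B0 = (\<Prod>i\<in>UNIV. (z2 + (\<chi> i. \<eta>))$i - (z2 - (\<chi> i. \<eta>))$i)"
      unfolding B0_def by (rule content_cbox_cart[OF ne])
    also have "\<dots> > 0" using eta by (intro prod_pos) auto
    finally show ?thesis .
  qed
  define \<delta> where "\<delta> = pp c1 / 2"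
  have dpos: "0 < \<delta>" unfolding \<delta>_def using ppc1 by simp
  define h1 where "h1 z = (if z \<in> Eset then 0 else (if z \<in> B0 then \<delta> else 0))" for z
  have "((\<lambda>x. \<delta>) has_integral (measure lborel B0 *\<^sub>R \<delta>)) B0"
    unfolding B0_def using has_integral_const by blast
  then have "((\<lambda>x. if x \<in> B0 then \<delta> else 0) has_integral (measure lborel B0 * \<delta>)) UNIV"
    using has_integral_restrict_UNIV[of B0 "\<lambda>x. \<delta>"] by simp
  then have h1int: "(h1 has_integral (measure lborel B0 * \<delta>)) UNIV"
    by (intro has_integral_spike[OF Eset_negligible _ \<open>((\<lambda>x. if x \<in> B0 then \<delta> else 0) has_integral _) UNIV\<close>])
      (simp add: h1_def)
  have le: "h1 z \<le> g0E z" for z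
  proof (cases "z \<in> Eset")
    case True then show ?thesis by (simp add: h1_def g0E_def)
  next
    case False
    show ?thesis
    proof (cases "z \<in> B0")
      case True
      have Q: "Q z" using B0Q[OF True] .
      then have VC: "V z \<in> C" and Dz: "Dm z" and pG1: "1 \<le> pG (V z)" and ppz: "\<delta> < pp (V z)"
        unfolding Q_def Dm_def \<delta>_def using pG_ge1[of "V z"] by (auto simp: less_imp_le)
      have "\<delta> \<le> pp (V z) * 1" using ppz by simp
      also have "\<dots> \<le> pp (V z) * real (pG (V z))"
        using pG1 pp_nonneg[OF VC] by (intro mult_left_mono) auto
      finally show ?thesis using False True VC Dz by (simp add: h1_def g0E_def g0_def \<Phi>_def)
    next
      case False
      then show ?thesis using \<open>z \<notin> Eset\<close> Phi_nonneg by (simp add: h1_def g0E_def g0_def)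
    qed
  qed
  have "measure lborel B0 * \<delta> \<le> integral UNIV g0E"
    using has_integral_le[OF h1int integrable_integral[OF g0E_integrable] le] .
  moreover have "0 < measure lborel B0 * \<delta>" using mB0 dpos by simp
  ultimately show ?thesis by linarith
qed

end

lemma int_vec_norm_ge1:
  assumes "x \<in> int_vecs" "x \<noteq> 0"
  shows "1 \<le> norm (x :: real^'k::finite)"
proof -
  obtain i where i: "x$i \<noteq> 0" using assms(2) by (auto simp: vec_eq_iff)
  have "x$i \<in> \<int>" using assms(1) unfolding int_vecs_def by auto
  then have "1 \<le> \<bar>x$i\<bar>" using i by (simp add: Ints_nonzero_abs_ge1)
  also have "\<dots> \<le> norm x" by (rule component_le_norm_cart)
  finally show ?thesis .
qed

theorem lemma7p1:
  fixes L W C :: "(real^'k::finite) set" and m :: "'k \<Rightarrow> nat" and r :: nat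
  assumes "finite_index_sublattice L"
    and "\<forall>i. 0 < m i"
    and "is_wall W"
    and "r = CARD('k) - dim W"
    and "\<forall>i. \<not> W \<subseteq> {b. b$i = 0}"
    and "open_cell_of W C"
  shows "\<exists>c\<ge>0.
     (\<lambda>N. wall_sum C L m N - c * N ^ ((\<Sum>i\<in>UNIV. m i) + CARD('k) - r))
        \<in> o[at_top](\<lambda>N. N ^ ((\<Sum>i\<in>UNIV. m i) + CARD('k) - r)) \<and>
     (c > 0 \<longleftrightarrow> lattice_in (W \<inter> L) W)"
proof -
  interpret lat L by unfold_locales (rule assms(1))
  obtain F where F: "F \<noteq> {}" "F \<subseteq> wall_pairs" "W = (\<Inter>(I,J)\<in>F. wall_hyperplane I J)"
    using assms(3) unfolding is_wall_def by blast
  have WF: "W = WF F" unfolding F(3) WF_def wall_hyperplane_def by auto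
  have finF: "finite F" by (rule finite_subset[OF subset_UNIV]) simp
  obtain a0 where a0: "C = {b. \<forall>(I,J)\<in>wall_pairs. sgn (wall_form I J b) = sgn (wall_form I J a0)}"
    using assms(6) unfolding open_cell_of_def is_cell_def by blast
  have CW: "C \<subseteq> W \<inter> pos_orthant" and Cdim: "aff_dim C = int (dim W)"
    using assms(6) unfolding open_cell_of_def by auto
  have spanWL: "span (W \<inter> L) = W" using span_WF_L[OF finF] WF by simp
  obtain B where B: "B \<subseteq> W \<inter> L" "independent B" "W \<inter> L \<subseteq> span B" "card B = dim (W \<inter> L)"
    using basis_exists[of "W \<inter> L"] by blast
  have spanB: "span B = W"
  proof
    show "span B \<subseteq> W" using span_mono[OF B(1)] spanWL by simp
    show "W \<subseteq> span B" using spanWL span_minimal[OF B(3) subspace_span] by simp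
  qed
  have finB: "finite B" using B(2) by (rule finiteI_independent)
  have "card B \<le> CARD('k)" using B(4) dim_subset_UNIV_cart[of "W \<inter> L"] by simp
  then obtain S :: "'k set" where S: "card S = card B" "finite S"
    using obtain_subset_with_card_n[of "card B" "UNIV :: 'k set"] by auto
  obtain \<beta> where \<beta>: "bij_betw \<beta> S B" using finite_same_card_bij[OF S(2) finB S(1)] by blast
  interpret ws L W C m F a0 S \<beta>
  proof unfold_locales
    show "\<forall>i. 0 < m i" by (rule assms(2))
    show "W = WF F" by (rule WF)
    show "C = {b. \<forall>(I,J)\<in>wall_pairs. sgn (wall_form I J b) = sgn (wall_form I J a0)}" by (rule a0)
    show "C \<subseteq> W \<inter> pos_orthant" by (rule CW)
    show "aff_dim C = int (dim W)" by (rule Cdim)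
    show "\<beta> ` S \<subseteq> W \<inter> L" using \<beta> B(1) by (simp add: bij_betw_def)
    show "inj_on \<beta> S" using \<beta> by (simp add: bij_betw_def)
    show "independent (\<beta> ` S)" using \<beta> B(2) by (simp add: bij_betw_def)
    show "span (\<beta> ` S) = W" using \<beta> spanB by (simp add: bij_betw_def)
  qed
  define D where "D = (\<Sum>i\<in>UNIV. m i) + dim W"
  have Deq: "(\<Sum>i\<in>UNIV. m i) + CARD('k) - r = D"
    unfolding D_def assms(4) using dim_subset_UNIV_cart[of W] by simp
  define c where "c = real (card Rset) * integral UNIV g0E"
  have cardR: "0 < card Rset" using zero_Rset Rset_finite card_gt_0_iff by blast
  have cpos: "0 < c" unfolding c_def using cardR g0E_pos by simp
  have lat: "lattice_in (W \<inter> L) W"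
    unfolding lattice_in_def
  proof (intro conjI)
    show "W \<inter> L \<subseteq> W" by blast
    show "0 \<in> W \<inter> L" using subspace_W L_zero by (simp add: subspace_0)
    show "\<forall>x\<in>W \<inter> L. \<forall>y\<in>W \<inter> L. x + y \<in> W \<inter> L" using subspace_W L_add by (simp add: subspace_add)
    show "\<forall>x\<in>W \<inter> L. - x \<in> W \<inter> L" using subspace_W L_neg by (simp add: subspace_neg)
    show "\<exists>e>0. \<forall>x\<in>W \<inter> L. x \<noteq> 0 \<longrightarrow> e \<le> norm x"
      using int_vec_norm_ge1 L_int by (intro exI[of _ 1]) auto
    show "span (W \<inter> L) = W" by (rule spanWL)
  qed
  have lim: "((\<lambda>N. wall_sum C L m N / N ^ D) \<longlongrightarrow> c) at_top"
    using main_lim unfolding D_def c_def .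
  have "((\<lambda>N. (wall_sum C L m N - c * N ^ D) / N ^ D) \<longlongrightarrow> c - c) at_top"
  proof (rule Lim_transform_eventually[OF tendsto_diff[OF lim tendsto_const]])
    show "eventually (\<lambda>N. wall_sum C L m N / N ^ D - c = (wall_sum C L m N - c * N ^ D) / N ^ D) at_top"
      using eventually_gt_at_top[of "0::real"] by eventually_elim (simp add: field_simps)
  qed
  moreover have "eventually (\<lambda>N::real. N ^ D \<noteq> 0) at_top"
    using eventually_gt_at_top[of "0::real"] by eventually_elim simp
  ultimately have "(\<lambda>N. wall_sum C L m N - c * N ^ D) \<in> o[at_top](\<lambda>N. N ^ D)"
    by (intro smalloI_tendsto) simp_all
  then show ?thesis unfolding Deq using cpos lat by (intro exI[of _ c]) auto
qed


end
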